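(* Let $p,n\in\mathbb{N}$ with $p\ge1$ even, $n\ge p+\frac p2$, and $r\in\mathbb{N}$ with $r\le p$. For $j=1,\dots,n$ let $\bm u_j$ have components $u_{i,j}=\sqrt{\tfrac{2}{n}}\,c_j\sin\!\big(\tfrac{j\pi}{n}(i-\tfrac12)\big)$, $i=1,\dots,n$, where $c_n=1/\sqrt2$ and $c_j=1$ for $j<n$. Then $\overline{X}^{p,r,0}\bm u_j=\lambda_j\bm u_j$ with $\lambda_j=n^{2r-1}g_p^r\big(\tfrac{j\pi}{n}\big)$, and these are all the eigenvalues of $\overline{X}^{p,r,0}$.
   Context: Cardinal B-spline: $\mathcal{N}_0(t)=1$ for $t\in[0,1)$, $0$ otherwise; $\mathcal{N}_p(t)=\frac{t}{p}\mathcal{N}_{p-1}(t)+\frac{p+1-t}{p}\mathcal{N}_{p-1}(t-1)$, $p\ge1$. Reduced-space basis ($p$ even): $C_c(x)=\mathcal{N}_p\big(nx-c+\tfrac{p+1}{2}\big)$, $\overline{N}^p_{i,0}(x)=\sum_{m\in\mathbb{Z}}\big(C_{i-\frac12+2mn}(x)-C_{-(i-\frac12)+2mn}(x)\big)$, $x\in[0,1]$, $i=1,\dots,n$. $\overline{X}^{p,r,0}_{i,j}=\int_0^1(\overline{N}^p_{i,0})^{(r)}(\overline{N}^p_{j,0})^{(r)}\,\mathrm{d}x$. Symbol: $g_p^r(\theta)=(-1)^r\mathcal{N}_{2p+1}^{(2r)}(p+1)+2(-1)^r\sum_{k=1}^p\mathcal{N}_{2p+1}^{(2r)}(p+1-k)\cos(k\theta)$.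 *)

theory Defs
  imports "HOL-Analysis.Analysis" "Jordan_Normal_Form.Char_Poly"
begin

fun cardB :: "nat \<Rightarrow> real \<Rightarrow> real" where
  "cardB 0 t = (if 0 \<le> t \<and> t < 1 then 1 else 0)"
| "cardB (Suc p) t = t / real (Suc p) * cardB p t
      + (real (Suc p) + 1 - t) / real (Suc p) * cardB p (t - 1)"

definition nderiv :: "nat \<Rightarrow> (real \<Rightarrow> real) \<Rightarrow> real \<Rightarrow> real" where
  "nderiv r f = (deriv ^^ r) f"

definition Cshift :: "nat \<Rightarrow> nat \<Rightarrow> real \<Rightarrow> real \<Rightarrow> real" where
  "Cshift p n c x = cardB p (real n * x - c + (real p + 1) / 2)"

definition Nbar :: "nat \<Rightarrow> nat \<Rightarrow> nat \<Rightarrow> real \<Rightarrow> real" where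
  "Nbar p n i x = (\<Sum>\<^sub>\<infinity> m::int.
      Cshift p n (real i - 1/2 + 2 * of_int m * real n) x
    - Cshift p n (-(real i - 1/2) + 2 * of_int m * real n) x)"

definition Xbar :: "nat \<Rightarrow> nat \<Rightarrow> nat \<Rightarrow> nat \<Rightarrow> nat \<Rightarrow> real" where
  "Xbar p r n i j = integral {0..1} (\<lambda>x. nderiv r (Nbar p n i) x * nderiv r (Nbar p n j) x)"

text \<open>The n x n matrix (0-based indices shifted by one).\<close>
definition Xmat :: "nat \<Rightarrow> nat \<Rightarrow> nat \<Rightarrow> real mat" where
  "Xmat p r n = mat n n (\<lambda>(i, j). Xbar p r n (i + 1) (j + 1))"

definition gsym :: "nat \<Rightarrow> nat \<Rightarrow> real \<Rightarrow> real" where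
  "gsym p r \<theta> = (-1) ^ r * nderiv (2 * r) (cardB (2 * p + 1)) (real p + 1)
     + 2 * (-1) ^ r * (\<Sum>k = 1..p. nderiv (2 * r) (cardB (2 * p + 1)) (real p + 1 - real k) * cos (real k * \<theta>))"

definition cco :: "nat \<Rightarrow> nat \<Rightarrow> real" where
  "cco n j = (if j = n then 1 / sqrt 2 else 1)"

text \<open>Vector u_j with components u_{i,j}, i = 1..n (stored 0-based).\<close>
definition uvec :: "nat \<Rightarrow> nat \<Rightarrow> real vec" where
  "uvec n j = vec n (\<lambda>i. sqrt (2 / real n) * cco n j * sin (real j * pi / real n * (real (i + 1) - 1/2)))"

end

theory Submission
  imports Defs
begin


definition tp :: "nat \<Rightarrow> real \<Rightarrow> real" where "tp q x = (if 0 \<le> x then x ^ q else 0)"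

lemma pascal_sum:
  fixes f :: "nat \<Rightarrow> real"
  shows "(\<Sum>k\<le>Suc m. (-1)^k * real (Suc m choose k) * f k)
       = (\<Sum>k\<le>m. (-1)^k * real (m choose k) * (f k - f (Suc k)))"
proof -
  have "(\<Sum>k\<le>Suc m. (-1)^k * real (Suc m choose k) * f k)
      = f 0 + (\<Sum>k\<le>m. (-1)^(Suc k) * real (Suc m choose Suc k) * f (Suc k))"
    by (subst sum.atMost_Suc_shift) simp
  also have "\<dots> = f 0 + (\<Sum>k\<le>m. (-1)^(Suc k) * real (m choose k) * f (Suc k))
       + (\<Sum>k\<le>m. (-1)^(Suc k) * real (m choose Suc k) * f (Suc k))"
  proof -
    have "(-1)^(Suc k) * real (Suc m choose Suc k) * f (Suc k) = (-1)^(Suc k) * real (m choose k) * f (Suc k)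
       + (-1)^(Suc k) * real (m choose Suc k) * f (Suc k)" for k
      by (simp add: algebra_simps)
    then show ?thesis by (simp only: sum.distrib add.assoc)
  qed
  also have "(\<Sum>k\<le>m. (-1)^(Suc k) * real (m choose Suc k) * f (Suc k))
      = (\<Sum>k\<le>Suc m. (-1)^k * real (m choose k) * f k) - f 0"
    by (subst sum.atMost_Suc_shift) simp
  also have "(\<Sum>k\<le>Suc m. (-1)^k * real (m choose k) * f k) = (\<Sum>k\<le>m. (-1)^k * real (m choose k) * f k)"
    by (simp add: sum.atMost_Suc)
  also have "f 0 + (\<Sum>k\<le>m. (-1)^(Suc k) * real (m choose k) * f (Suc k))
       + ((\<Sum>k\<le>m. (-1)^k * real (m choose k) * f k) - f 0)
       = (\<Sum>k\<le>m. (-1)^k * real (m choose k) * (f k - f (Suc k)))"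
    by (simp add: sum_subtractf right_diff_distrib sum_negf)
  finally show ?thesis .
qed

lemma zero_sum_aux:
  fixes g :: "nat \<Rightarrow> real"
  shows "(\<Sum>k\<le>Suc q. (-1)^k * real (Suc q choose k) * (real k * g k + (real q + 1 - real k) * g (Suc k))) = 0"
proof -
  have A: "(\<Sum>k\<le>Suc q. (-1)^k * real (Suc q choose k) * (real k * g k))
     = (\<Sum>k\<le>q. (-1)^(Suc k) * real (Suc q choose Suc k) * (real (Suc k) * g (Suc k)))"
    by (subst sum.atMost_Suc_shift) simp
  have B: "(\<Sum>k\<le>Suc q. (-1)^k * real (Suc q choose k) * ((real q + 1 - real k) * g (Suc k)))
     = (\<Sum>k\<le>q. (-1)^k * real (Suc q choose k) * ((real q + 1 - real k) * g (Suc k)))"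
    by (simp add: sum.atMost_Suc)
  have C: "(-1)^(Suc k) * real (Suc q choose Suc k) * (real (Suc k) * g (Suc k))
      + (-1)^k * real (Suc q choose k) * ((real q + 1 - real k) * g (Suc k)) = 0" if "k \<le> q" for k
  proof -
    have e1: "real (Suc k) * real (Suc q choose Suc k) = real (Suc q) * real (q choose k)"
      using Suc_times_binomial[of k q] by (metis of_nat_mult)
    have e2: "real (Suc q - k) * real (Suc q choose k) = real (Suc q) * real (q choose k)"
      using binomial_absorb_comp[of "Suc q" k] by (metis diff_Suc_1 of_nat_mult)
    have e3: "real (Suc q - k) = real q + 1 - real k" using that by simp
    have h: "(real q + 1 - real k) * real (Suc q choose k) = real (Suc k) * real (Suc q choose Suc k)"
      using e1 e2 e3 by metis
    have "(-1)^(Suc k) * real (Suc q choose Suc k) * (real (Suc k) * g (Suc k))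
      + (-1)^k * real (Suc q choose k) * ((real q + 1 - real k) * g (Suc k))
      = (-1)^k * g (Suc k) * ((real q + 1 - real k) * real (Suc q choose k) - real (Suc k) * real (Suc q choose Suc k))"
      by (simp only: power_Suc) (simp only: algebra_simps)
    then show ?thesis using h by simp
  qed
  have "(\<Sum>k\<le>Suc q. (-1)^k * real (Suc q choose k) * (real k * g k + (real q + 1 - real k) * g (Suc k)))
      = (\<Sum>k\<le>Suc q. (-1)^k * real (Suc q choose k) * (real k * g k))
      + (\<Sum>k\<le>Suc q. (-1)^k * real (Suc q choose k) * ((real q + 1 - real k) * g (Suc k)))"
    by (simp only: distrib_left sum.distrib)
  also have "\<dots> = (\<Sum>k\<le>q. (-1)^(Suc k) * real (Suc q choose Suc k) * (real (Suc k) * g (Suc k))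
      + (-1)^k * real (Suc q choose k) * ((real q + 1 - real k) * g (Suc k)))"
    by (simp only: A B sum.distrib)
  also have "\<dots> = 0" by (intro sum.neutral ballI C) simp
  finally show ?thesis .
qed

lemma tp_mult1: "t * tp q (t - k) = tp (Suc q) (t - k) + k * tp q (t - k)"
  by (simp add: tp_def algebra_simps)

lemma tp_mult2: "(c - t) * tp q (t - k) = (c - k) * tp q (t - k) - tp (Suc q) (t - k)"
  by (simp add: tp_def algebra_simps)

lemma cardB_closed:
  "cardB q t = (\<Sum>k\<le>Suc q. (-1)^k * real (Suc q choose k) * tp q (t - real k)) / fact q"
proof (induction q arbitrary: t)
  case 0
  then show ?case by (simp add: tp_def)
next
  case (Suc q)
  define g where "g k = tp q (t - real k)" for k
  define a where "a k = (-1)^k * real (Suc q choose k)" for k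
  define S1 where "S1 = (\<Sum>k\<le>Suc q. a k * g k)"
  define S2 where "S2 = (\<Sum>k\<le>Suc q. a k * g (Suc k))"
  define S3 where "S3 = (\<Sum>k\<le>Suc (Suc q). (-1)^k * real (Suc (Suc q) choose k) * tp (Suc q) (t - real k))"
  have e1: "cardB q t = S1 / fact q" unfolding S1_def a_def g_def by (rule Suc.IH)
  have sh: "t - 1 - real k = t - real (Suc k)" for k by simp
  have e2: "cardB q (t - 1) = S2 / fact q" unfolding S2_def a_def g_def
    using Suc.IH[of "t-1"] by (simp only: sh)
  have rec: "cardB (Suc q) t = (t * S1 + (real q + 2 - t) * S2) / (fact q * (real q + 1))"
    unfolding cardB.simps e1 e2 by (simp add: field_simps) (simp add: add_divide_distrib[symmetric] diff_divide_distrib[symmetric] algebra_simps)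
  have "t * S1 + (real q + 2 - t) * S2
      = (\<Sum>k\<le>Suc q. a k * (t * g k + (real q + 2 - t) * g (Suc k)))"
    unfolding S1_def S2_def by (simp only: sum_distrib_left sum.distrib[symmetric] algebra_simps)
  also have "\<dots> = (\<Sum>k\<le>Suc q. a k * (tp (Suc q) (t - real k) - tp (Suc q) (t - real (Suc k))))
     + (\<Sum>k\<le>Suc q. a k * (real k * g k + (real q + 1 - real k) * g (Suc k)))"
  proof -
    have "t * g k + (real q + 2 - t) * g (Suc k) = (tp (Suc q) (t - real k) - tp (Suc q) (t - real (Suc k)))
       + (real k * g k + (real q + 1 - real k) * g (Suc k))" for k
      using tp_mult1[of t q "real k"] tp_mult2[of "real q + 2" t q "real (Suc k)"]
      unfolding g_def by (simp add: algebra_simps)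
    then show ?thesis by (simp only: sum.distrib[symmetric] distrib_left)
  qed
  also have "(\<Sum>k\<le>Suc q. a k * (real k * g k + (real q + 1 - real k) * g (Suc k))) = 0"
    using zero_sum_aux[of q g] unfolding a_def by (simp only: mult.assoc)
  also have "(\<Sum>k\<le>Suc q. a k * (tp (Suc q) (t - real k) - tp (Suc q) (t - real (Suc k)))) = S3"
    using pascal_sum[of "Suc q" "\<lambda>k. tp (Suc q) (t - real k)"] unfolding a_def S3_def by (simp only: mult.assoc)
  finally have "t * S1 + (real q + 2 - t) * S2 = S3" by simp
  then show ?case unfolding rec S3_def[symmetric] by (simp add: field_simps)
qed



lemma sum_rev_atMost: "(\<Sum>k\<le>N. g k) = (\<Sum>k\<le>N. g (N - k))" for g :: "nat \<Rightarrow> real"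
  by (rule sum.reindex_bij_witness[where i="\<lambda>k. N - k" and j="\<lambda>k. N - k"]) auto

lemma fin_diff: "j < m \<Longrightarrow> (\<Sum>k\<le>m. (-1)^k * real (m choose k) * (x - real k)^j) = 0"
proof (induction m arbitrary: j)
  case 0 then show ?case by simp
next
  case (Suc m)
  have bin: "y^j - (y - 1)^j = - (\<Sum>i<j. real (j choose i) * y^i * (-1)^(j-i))" for y :: real
  proof -
    have "(y + (-1))^j = (\<Sum>i\<le>j. real (j choose i) * y^i * (-1)^(j-i))" by (rule binomial_ring)
    also have "\<dots> = (\<Sum>i<j. real (j choose i) * y^i * (-1)^(j-i)) + y^j"
      by (simp add: lessThan_Suc_atMost[symmetric])
    finally show ?thesis by simp
  qed
  have "(\<Sum>k\<le>Suc m. (-1)^k * real (Suc m choose k) * (x - real k)^j)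
      = (\<Sum>k\<le>m. (-1)^k * real (m choose k) * ((x - real k)^j - (x - real (Suc k))^j))"
    by (rule pascal_sum)
  also have "\<dots> = (\<Sum>k\<le>m. (-1)^k * real (m choose k) * (- (\<Sum>i<j. real (j choose i) * (x - real k)^i * (-1)^(j-i))))"
  proof -
    have "(x - real k)^j - (x - real (Suc k))^j = - (\<Sum>i<j. real (j choose i) * (x - real k)^i * (-1)^(j-i))" for k
      using bin[of "x - real k"] by (simp add: algebra_simps)
    then show ?thesis by simp
  qed
  also have "\<dots> = - (\<Sum>k\<le>m. \<Sum>i<j. (-1)^k * real (m choose k) * (real (j choose i) * (x - real k)^i * (-1)^(j-i)))"
    by (simp add: sum_distrib_left sum_negf)
  also have "\<dots> = - (\<Sum>i<j. \<Sum>k\<le>m. (-1)^k * real (m choose k) * (real (j choose i) * (x - real k)^i * (-1)^(j-i)))"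
    by (subst sum.swap) (rule refl)
  also have "\<dots> = - (\<Sum>i<j. real (j choose i) * (-1)^(j-i) * (\<Sum>k\<le>m. (-1)^k * real (m choose k) * (x - real k)^i))"
    by (simp add: sum_distrib_left mult_ac)
  also have "\<dots> = 0" using Suc.IH Suc.prems by simp
  finally show ?case .
qed

definition th :: "nat \<Rightarrow> real \<Rightarrow> real" where
  "th q x = (if 0 < x then x ^ q else if x = 0 \<and> q = 0 then 1/2 else 0)"

lemma th_tp: "q \<noteq> 0 \<Longrightarrow> th q x = tp q x" by (auto simp: th_def tp_def)

lemma th_neg: "x < 0 \<Longrightarrow> th q x = 0" by (simp add: th_def)
lemma th_nonpos: "x \<le> 0 \<Longrightarrow> q \<noteq> 0 \<Longrightarrow> th q x = 0" by (simp add: th_def)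

lemma th_max: "q \<noteq> 0 \<Longrightarrow> th q x = (max x 0) ^ q" by (auto simp: th_def max_def)

lemma neg1_sq: "(-1::real)^k * (-1)^k = 1" by (induction k) auto

lemma th_refl: "th q y = y^q - ((-1)^q) * th q (-y)"
proof -
  have "(-1)^q * (-y)^q = y^q" by (simp flip: power_mult_distrib)
  then show ?thesis by (auto simp: th_def)
qed

definition Pd :: "nat \<Rightarrow> nat \<Rightarrow> real \<Rightarrow> real" where
  "Pd P j s = (\<Sum>k\<le>Suc P. (-1)^k * real (Suc P choose k) * th (P - j) (s - real k)) / fact (P - j)"

lemma Pd0: "P \<noteq> 0 \<Longrightarrow> Pd P 0 s = cardB P s"
  by (simp add: Pd_def cardB_closed th_tp)

lemma Pd_sym:
  assumes "j \<le> P"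
  shows "Pd P j u = (-1)^j * Pd P j (real P + 1 - u)"
proof -
  define q where "q = P - j"
  define a where "a k = (-1)^k * real (Suc P choose k)" for k
  have q: "q < Suc P" unfolding q_def by simp
  have L: "(\<Sum>k\<le>Suc P. a k * th q (u - real k)) = - ((-1)^q) * (\<Sum>k\<le>Suc P. a k * th q (real k - u))"
  proof -
    have "(\<Sum>k\<le>Suc P. a k * th q (u - real k)) = (\<Sum>k\<le>Suc P. a k * (u - real k)^q)
          - ((-1)^q) * (\<Sum>k\<le>Suc P. a k * th q (real k - u))"
    proof -
      have "th q (u - real k) = (u - real k)^q - ((-1)^q) * th q (real k - u)" for k
        using th_refl[of q "u - real k"] by simp
      then have "(\<Sum>k\<le>Suc P. a k * th q (u - real k)) = (\<Sum>k\<le>Suc P. a k * ((u - real k)^q - (-1)^q * th q (real k - u)))"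
        by (simp only:)
      also have "\<dots> = (\<Sum>k\<le>Suc P. a k * (u - real k)^q) - (-1)^q * (\<Sum>k\<le>Suc P. a k * th q (real k - u))"
      proof -
        have "(\<Sum>k\<le>Suc P. a k * ((u - real k)^q - (-1)^q * th q (real k - u)))
            = (\<Sum>k\<le>Suc P. a k * (u - real k)^q - (-1)^q * (a k * th q (real k - u)))"
          by (rule sum.cong) (simp_all add: algebra_simps)
        also have "\<dots> = (\<Sum>k\<le>Suc P. a k * (u - real k)^q) - (-1)^q * (\<Sum>k\<le>Suc P. a k * th q (real k - u))"
          by (simp only: sum_subtractf sum_distrib_left)
        finally show ?thesis .
      qed
      finally show ?thesis .
    qed
    also have "(\<Sum>k\<le>Suc P. a k * (u - real k)^q) = 0"
      using fin_diff[OF q, of u] unfolding a_def by simp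
    finally show ?thesis by simp
  qed
  have R: "(\<Sum>k\<le>Suc P. a k * th q (real P + 1 - u - real k)) = (-1)^(Suc P) * (\<Sum>k\<le>Suc P. a k * th q (real k - u))"
  proof -
    have "(\<Sum>k\<le>Suc P. a k * th q (real P + 1 - u - real k)) = (\<Sum>k\<le>Suc P. a (Suc P - k) * th q (real P + 1 - u - real (Suc P - k)))"
      by (rule sum_rev_atMost)
    also have "\<dots> = (\<Sum>k\<le>Suc P. (-1)^(Suc P) * (a k * th q (real k - u)))"
    proof (rule sum.cong[OF refl])
      fix k assume k: "k \<in> {..Suc P}"
      then have kk: "k \<le> Suc P" by simp
      have e1: "real P + 1 - u - real (Suc P - k) = real k - u" using kk by (simp add: of_nat_diff)
      have e2: "(Suc P choose (Suc P - k)) = (Suc P choose k)" using kk by (rule binomial_symmetric[symmetric])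
      have e3: "(-1::real)^(Suc P - k) = (-1)^(Suc P) * (-1)^k"
      proof -
        have "(-1::real)^(Suc P) = (-1)^(Suc P - k) * (-1)^k" using kk by (simp flip: power_add)
        then have "(-1::real)^(Suc P) * (-1)^k = (-1)^(Suc P - k) * ((-1)^k * (-1)^k)" by (simp only: mult.assoc)
        then show ?thesis by (simp only: neg1_sq mult_1_right)
      qed
      show "a (Suc P - k) * th q (real P + 1 - u - real (Suc P - k)) = (-1)^(Suc P) * (a k * th q (real k - u))"
        unfolding a_def e1 e2 e3 by simp
    qed
    finally show ?thesis by (simp only: sum_distrib_left)
  qed
  have "Pd P j u = (\<Sum>k\<le>Suc P. a k * th q (u - real k)) / fact q" unfolding Pd_def a_def q_def by simp
  also have "\<dots> = - ((-1)^q) * (-1)^(Suc P) * ((\<Sum>k\<le>Suc P. a k * th q (real P + 1 - u - real k)) / fact q)"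
    unfolding L R by (simp add: algebra_simps)
  also have "(\<Sum>k\<le>Suc P. a k * th q (real P + 1 - u - real k)) / fact q = Pd P j (real P + 1 - u)"
    unfolding Pd_def a_def q_def by simp
  also have "- ((-1)^q) * (-1)^(Suc P) = ((-1::real)^j)"
  proof -
    have "q + Suc P + 1 = (P + 1) + (P + 1) - j" using assms unfolding q_def by simp
    have "- ((-1)^q) * (-1::real)^(Suc P) = (-1)^(q + P + 2)" by (simp add: power_add)
    also have "q + P + 2 = 2 * (P + 1 - j) + j" using assms unfolding q_def by simp
    also have "(-1::real)^\<dots> = (-1)^j" by (simp add: power_add power_mult)
    finally show ?thesis .
  qed
  finally show ?thesis .
qed

lemma Pd_neg: "u < 0 \<Longrightarrow> Pd P j u = 0"
  by (simp add: Pd_def th_neg)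

lemma Pd_big: "j \<le> P \<Longrightarrow> u > real P + 1 \<Longrightarrow> Pd P j u = 0"
  by (subst Pd_sym) (auto intro: Pd_neg)

lemma th_deriv:
  assumes "q \<noteq> 0" "q \<ge> 2 \<or> x \<noteq> 0"
  shows "(th q has_real_derivative real q * th (q - 1) x) (at x)"
proof -
  consider "x > 0" | "x < 0" | "x = 0 \<and> q \<ge> 2" using assms by linarith
  then show ?thesis
  proof cases
    case 1
    have "((\<lambda>y. y^q) has_real_derivative real q * x^(q - Suc 0)) (at x)" by (rule DERIV_pow)
    moreover have "th (q - 1) x = x^(q - Suc 0)" using 1 by (simp add: th_def)
    ultimately have "((\<lambda>y. y^q) has_real_derivative real q * th (q - 1) x) (at x)" by simp
    then show ?thesis
      by (rule has_field_derivative_transform_within_open[where S="{0<..}"]) (use 1 in \<open>auto simp: th_def\<close>)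
  next
    case 2
    have "((\<lambda>y. 0) has_real_derivative real q * th (q - 1) x) (at x)" using 2 by (simp add: th_def)
    then show ?thesis
      by (rule has_field_derivative_transform_within_open[where S="{..<0}"]) (use 2 in \<open>auto simp: th_def\<close>)
  next
    case 3
    have c: "isCont (th (q - 1)) 0"
    proof -
      have "th (q - 1) = (\<lambda>z. (max z 0) ^ (q - 1))" using 3 by (intro ext th_max) simp
      then show ?thesis by (simp add: continuous_intros)
    qed
    have "\<forall>z. th q z - th q 0 = th (q - 1) z * (z - 0)"
      using 3 by (auto simp: th_def power_eq_if)
    moreover have "th (q - 1) 0 = real q * th (q - 1) 0" using 3 by (simp add: th_def)
    ultimately show ?thesis using c 3 unfolding CARAT_DERIV by auto
  qed
qed

lemma Pd_deriv:
  assumes "j < P" "P - j \<ge> 2 \<or> s \<notin> \<int>"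
  shows "(Pd P j has_real_derivative Pd P (Suc j) s) (at s)"
proof -
  define q where "q = P - j"
  have q0: "q \<noteq> 0" using assms unfolding q_def by simp
  have qq: "P - Suc j = q - 1" unfolding q_def by simp
  have d: "(th q has_real_derivative real q * th (q - 1) (s - real k)) (at (s - real k))" for k
  proof (rule th_deriv[OF q0])
    show "2 \<le> q \<or> s - real k \<noteq> 0"
      using assms unfolding q_def by (cases "s = real k") auto
  qed
  have "((\<lambda>s. (\<Sum>k\<le>Suc P. (-1)^k * real (Suc P choose k) * th q (s - real k)) / fact q)
     has_real_derivative (\<Sum>k\<le>Suc P. (-1)^k * real (Suc P choose k) * (real q * th (q - 1) (s - real k))) / fact q) (at s)"
  proof -
    have d': "((\<lambda>s. th q (s - real k)) has_real_derivative real q * th (q - 1) (s - real k)) (at s)" for k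
    proof -
      have "(th q has_real_derivative real q * th (q - 1) (s - real k)) (at (s + - real k))"
        using d[of k] by simp
      then have "((\<lambda>x. th q (x + - real k)) has_real_derivative real q * th (q - 1) (s - real k)) (at s)"
        by (simp only: DERIV_shift)
      then show ?thesis by simp
    qed
    show ?thesis
      by (rule DERIV_cdivide, rule DERIV_sum, rule DERIV_cmult, rule d')
  qed
  moreover have "(\<Sum>k\<le>Suc P. (-1)^k * real (Suc P choose k) * (real q * th (q - 1) (s - real k))) / fact q
      = Pd P (Suc j) s"
  proof -
    have f: "fact q = real q * fact (q - 1)" by (rule fact_reduce) (use q0 in simp)
    have "(\<Sum>k\<le>Suc P. (-1)^k * real (Suc P choose k) * (real q * th (q - 1) (s - real k)))
        = real q * (\<Sum>k\<le>Suc P. (-1)^k * real (Suc P choose k) * th (q - 1) (s - real k))"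
      by (subst sum_distrib_left) (rule sum.cong, auto)
    then show ?thesis unfolding Pd_def qq f using q0 by simp
  qed
  ultimately show ?thesis unfolding Pd_def q_def by simp
qed

lemma nderiv_Suc: "nderiv (Suc j) F = deriv (nderiv j F)"
  by (simp add: nderiv_def)

lemma nderiv_0: "nderiv 0 F = F"
  by (simp add: nderiv_def)

lemma nderiv_local:
  assumes "open V" "\<And>x. x \<in> V \<Longrightarrow> F x = G 0 x"
    "\<And>j x. j < r \<Longrightarrow> x \<in> V \<Longrightarrow> (G j has_real_derivative G (Suc j) x) (at x)"
  shows "j \<le> r \<Longrightarrow> x \<in> V \<Longrightarrow> nderiv j F x = G j x"
proof (induction j arbitrary: x)
  case 0 then show ?case using assms(2) by (simp add: nderiv_0)
next
  case (Suc j)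
  have "(nderiv j F has_real_derivative G (Suc j) x) (at x)"
    by (rule has_field_derivative_transform_within_open[OF assms(3)[of j x] assms(1) Suc.prems(2)])
       (use Suc in auto)
  then show ?case by (simp add: nderiv_Suc DERIV_imp_deriv)
qed

lemma nderiv_cardB:
  assumes "j < P"
  shows "nderiv j (cardB P) x = Pd P j x"
proof (rule nderiv_local[where V=UNIV and r="P - 1" and G="Pd P"])
  show "\<And>x. x \<in> UNIV \<Longrightarrow> cardB P x = Pd P 0 x" using assms by (simp add: Pd0)
  show "\<And>i x. i < P - 1 \<Longrightarrow> x \<in> UNIV \<Longrightarrow> (Pd P i has_real_derivative Pd P (Suc i) x) (at x)"
    by (rule Pd_deriv) auto
qed (use assms in auto)



lemma Beta_nat: "Beta (real a + 1) (real b + 1) = fact a * fact b / fact (a + b + 1)"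
proof -
  have g: "Gamma (real n + 1) = fact n" for n
    using Gamma_fact[of n] by (simp add: add.commute)
  have e: "real a + 1 + (real b + 1) = real (a + b + 1) + 1" by simp
  show ?thesis unfolding Beta_def by (simp only: e g)
qed

lemma poly_beta01:
  "((\<lambda>u. u^a * (1 - u)^b) has_integral (fact a * fact b / fact (a + b + 1))) {0..1::real}"
proof -
  have B: "((\<lambda>u. u powr (real a + 1 - 1) * (1 - u) powr (real b + 1 - 1)) has_integral Beta (real a + 1) (real b + 1)) {0..1}"
    by (rule has_integral_Beta_real) auto
  show ?thesis unfolding Beta_nat[symmetric]
  proof (rule has_integral_spike_finite[OF _ _ B])
    show "finite {0::real, 1}" by simp
    fix u :: real assume u: "u \<in> {0..1} - {0, 1}"
    then have "0 < u" "0 < 1 - u" by auto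
    then show "u ^ a * (1 - u) ^ b = u powr (real a + 1 - 1) * (1 - u) powr (real b + 1 - 1)"
      by (simp add: powr_realpow)
  qed
qed

lemma poly_beta:
  fixes K L :: real
  assumes "K < L"
  shows "((\<lambda>t. (t - K)^a * (L - t)^b) has_integral ((L - K)^(a+b+1) * (fact a * fact b / fact (a+b+1)))) {K..L}"
proof -
  define D where "D = L - K"
  have D: "D > 0" using assms unfolding D_def by simp
  define f where "f u = u^a * (1 - u)^b" for u :: real
  have "((\<lambda>x. f ((1/D) *\<^sub>R x + (- K / D))) has_integral (1 / \<bar>1/D\<bar> ^ DIM(real)) *\<^sub>R (fact a * fact b / fact (a + b + 1)))
     ((\<lambda>x. (1 / (1/D)) *\<^sub>R x + - ((1 / (1/D)) *\<^sub>R (- K / D))) ` cbox 0 1)"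
    by (rule has_integral_affinity) (use poly_beta01 D in \<open>auto simp: f_def\<close>)
  moreover have "(\<lambda>x. (1 / (1/D)) *\<^sub>R x + - ((1 / (1/D)) *\<^sub>R (- K / D))) ` cbox 0 1 = {K..L}"
  proof -
    have "(\<lambda>x. (1 / (1/D)) *\<^sub>R x + - ((1 / (1/D)) *\<^sub>R (- K / D))) = (\<lambda>x. D * x + K)"
      using D by (auto simp: field_simps)
    then show ?thesis using D by (simp add: image_affinity_atLeastAtMost D_def)
  qed
  ultimately have I: "((\<lambda>x. f ((x - K) / D)) has_integral D * (fact a * fact b / fact (a + b + 1))) {K..L}"
    using D by (simp add: diff_divide_distrib)
  have I2: "((\<lambda>x. D^(a+b) * f ((x - K) / D)) has_integral D^(a+b) * (D * (fact a * fact b / fact (a + b + 1)))) {K..L}"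
    by (rule has_integral_mult_right[OF I])
  have e: "D^(a+b) * f ((x - K) / D) = (x - K)^a * (L - x)^b" for x
  proof -
    have "1 - (x - K) / D = (L - x) / D" using D unfolding D_def by (simp add: field_simps)
    then show ?thesis unfolding f_def using D by (simp add: power_divide power_add field_simps)
  qed
  show ?thesis using I2 unfolding e D_def[symmetric] by (simp add: power_add mult_ac)
qed

lemma th_prod_integral:
  "((\<lambda>t. th a (t - K) * th b (L - t)) has_integral (fact a * fact b / fact (a+b+1) * tp (a+b+1) (L - K))) UNIV"
proof (cases "K < L")
  case True
  have "((\<lambda>t. if t \<in> {K..L} then (t - K)^a * (L - t)^b else 0) has_integral ((L - K)^(a+b+1) * (fact a * fact b / fact (a+b+1)))) UNIV"
    unfolding has_integral_restrict_UNIV by (rule poly_beta[OF True])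
  note H = this
  have "((\<lambda>t. th a (t - K) * th b (L - t)) has_integral ((L - K)^(a+b+1) * (fact a * fact b / fact (a+b+1)))) UNIV"
  proof (rule has_integral_spike_finite[OF _ _ H])
    show "finite {K, L}" by simp
    fix t assume "t \<in> UNIV - {K, L}"
    then have "t \<noteq> K" "t \<noteq> L" by auto
    then show "th a (t - K) * th b (L - t) = (if t \<in> {K..L} then (t - K)^a * (L - t)^b else 0)"
      by (auto simp: th_def)
  qed
  moreover have "(L - K) ^ (a + b + 1) * (fact a * fact b / fact (a + b + 1)) = fact a * fact b / fact (a + b + 1) * tp (a + b + 1) (L - K)"
    using True by (simp add: tp_def)
  ultimately show ?thesis by (simp only:)
next
  case False
  have H0: "((\<lambda>t. 0::real) has_integral 0) UNIV" by simp
  have "((\<lambda>t. th a (t - K) * th b (L - t)) has_integral 0) UNIV"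
  proof (rule has_integral_spike_finite[OF _ _ H0])
    show "finite {K}" by simp
    fix t assume "t \<in> UNIV - {K}"
    then have "t \<noteq> K" by auto
    then show "th a (t - K) * th b (L - t) = 0" using False by (auto simp: th_def)
  qed
  moreover have "tp (a+b+1) (L - K) = 0" using False by (auto simp: tp_def)
  ultimately show ?thesis by simp
qed

lemma cauchy_binom:
  fixes f :: "nat \<Rightarrow> real"
  shows "(\<Sum>k\<le>N. \<Sum>l\<le>N. (-1)^k * real (N choose k) * ((-1)^l * real (N choose l) * f (k + l)))
       = (\<Sum>m\<le>2*N. (-1)^m * real (2*N choose m) * f m)"
proof -
  define G where "G k l = (-1)^k * real (N choose k) * ((-1)^l * real (N choose l) * f (k + l))" for k l
  have "(\<Sum>k\<le>N. \<Sum>l\<le>N. G k l) = (\<Sum>(k,l)\<in>{..N}\<times>{..N}. G k l)"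
    by (simp add: sum.cartesian_product)
  also have "\<dots> = (\<Sum>(k,l)\<in>{(k,l). k + l \<le> 2*N}. G k l)"
  proof (rule sum.mono_neutral_left)
    show "finite {(k,l). k + l \<le> 2*N}" by (rule finite_subset[of _ "{..2*N}\<times>{..2*N}"]) auto
  qed (auto simp: G_def)
  also have "\<dots> = (\<Sum>m\<le>2*N. \<Sum>i\<le>m. G i (m - i))"
    by (rule sum.triangle_reindex_eq)
  also have "\<dots> = (\<Sum>m\<le>2*N. (-1)^m * real (2*N choose m) * f m)"
  proof (rule sum.cong[OF refl])
    fix m assume m: "m \<in> {..2*N}"
    have "(\<Sum>i\<le>m. G i (m - i)) = (\<Sum>i\<le>m. (-1)^m * f m * (real (N choose i) * real (N choose (m - i))))"
    proof (rule sum.cong[OF refl])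
      fix i assume "i \<in> {..m}"
      then have i: "i \<le> m" by simp
      have "(-1::real)^i * (-1)^(m - i) = (-1)^m" using i by (simp flip: power_add)
      then show "G i (m - i) = (-1)^m * f m * (real (N choose i) * real (N choose (m - i)))"
        unfolding G_def using i by (simp add: algebra_simps)
    qed
    also have "\<dots> = (-1)^m * f m * real (\<Sum>i\<le>m. (N choose i) * (N choose (m - i)))"
      by (simp add: sum_distrib_left)
    also have "(\<Sum>i\<le>m. (N choose i) * (N choose (m - i))) = (2*N choose m)"
      using vandermonde[of N N m] by (simp add: mult_2)
    finally show "(\<Sum>i\<le>m. G i (m - i)) = (-1)^m * real (2*N choose m) * f m" by simp
  qed
  finally show ?thesis unfolding G_def .
qed



lemma Ad_has_integral:
  assumes "r \<le> p"
  shows "((\<lambda>s. Pd p r (s + a) * Pd p r (s + b)) has_integral ((-1)^r * Pd (2*p+1) (2*r) (real p + 1 - (b - a)))) UNIV"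
proof -
  define q where "q = p - r"
  define c where "c k = (-1)^k * real (Suc p choose k)" for k
  define M where "M l = real p + 1 - b - real l" for l
  define d where "d = b - a"
  define C where "C k l = ((-1)^r / (fact q * fact q)) * (c k * c l)" for k l
  have e1: "Pd p r (s + a) = (\<Sum>k\<le>Suc p. c k * th q (s - (real k - a))) / fact q" for s
  proof -
    have m: "s + a - real k = s - (real k - a)" for k by simp
    show ?thesis unfolding Pd_def c_def q_def m ..
  qed
  have e2: "Pd p r (s + b) = (-1)^r * ((\<Sum>l\<le>Suc p. c l * th q (M l - s)) / fact q)" for s
  proof -
    have sy: "Pd p r (s + b) = (-1)^r * Pd p r (real p + 1 - (s + b))" by (rule Pd_sym[OF assms])
    have m: "real p + 1 - (s + b) - real l = M l - s" for l unfolding M_def by simp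
    have "Pd p r (real p + 1 - (s + b)) = (\<Sum>l\<le>Suc p. c l * th q (real p + 1 - (s + b) - real l)) / fact q"
      unfolding Pd_def c_def q_def by simp
    also have "\<dots> = (\<Sum>l\<le>Suc p. c l * th q (M l - s)) / fact q" unfolding m ..
    finally show ?thesis unfolding sy by simp
  qed
  have prod: "Pd p r (s + a) * Pd p r (s + b) = (\<Sum>k\<le>Suc p. \<Sum>l\<le>Suc p. C k l * (th q (s - (real k - a)) * th q (M l - s)))" for s
  proof -
    have "Pd p r (s + a) * Pd p r (s + b) = ((-1)^r / (fact q * fact q)) * ((\<Sum>k\<le>Suc p. c k * th q (s - (real k - a))) * (\<Sum>l\<le>Suc p. c l * th q (M l - s)))"
      unfolding e2 unfolding e1 by simp
    also have "(\<Sum>k\<le>Suc p. c k * th q (s - (real k - a))) * (\<Sum>l\<le>Suc p. c l * th q (M l - s))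
       = (\<Sum>k\<le>Suc p. \<Sum>l\<le>Suc p. (c k * c l) * (th q (s - (real k - a)) * th q (M l - s)))"
      unfolding sum_product by (intro sum.cong refl) (simp add: mult_ac)
    finally show ?thesis unfolding C_def sum_distrib_left by (simp only: mult.assoc)
  qed
  have int: "((\<lambda>s. \<Sum>k\<le>Suc p. \<Sum>l\<le>Suc p. C k l * (th q (s - (real k - a)) * th q (M l - s))) has_integral
      (\<Sum>k\<le>Suc p. \<Sum>l\<le>Suc p. C k l * (fact q * fact q / fact (q+q+1) * tp (q+q+1) (M l - (real k - a))))) UNIV"
    by (intro has_integral_sum has_integral_mult_right th_prod_integral) auto
  have val: "(\<Sum>k\<le>Suc p. \<Sum>l\<le>Suc p. C k l * (fact q * fact q / fact (q+q+1) * tp (q+q+1) (M l - (real k - a))))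
      = (-1)^r * Pd (2*p+1) (2*r) (real p + 1 - (b - a))"
  proof -
    have "(\<Sum>k\<le>Suc p. \<Sum>l\<le>Suc p. C k l * (fact q * fact q / fact (q+q+1) * tp (q+q+1) (M l - (real k - a))))
      = ((-1)^r / fact (q+q+1)) * (\<Sum>k\<le>Suc p. \<Sum>l\<le>Suc p. (-1)^k * real (Suc p choose k) * ((-1)^l * real (Suc p choose l)
            * th (q+q+1) (real p + 1 - d - real (k + l))))"
    proof -
      have "C k l * (fact q * fact q / fact (q+q+1) * tp (q+q+1) (M l - (real k - a)))
          = ((-1)^r / fact (q+q+1)) * ((-1)^k * real (Suc p choose k) * ((-1)^l * real (Suc p choose l)
            * th (q+q+1) (real p + 1 - d - real (k + l))))" for k l
      proof -
        have ma: "M l - (real k - a) = real p + 1 - d - real (k + l)" unfolding M_def d_def by simp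
        have t: "tp (q+q+1) x = th (q+q+1) x" for x by (simp add: th_tp)
        have "fact q \<noteq> (0::real)" by simp
        then show ?thesis unfolding ma t C_def c_def by (simp add: field_simps)
      qed
      note tm = this
      show ?thesis unfolding sum_distrib_left tm by (rule refl)
    qed
    also have "(\<Sum>k\<le>Suc p. \<Sum>l\<le>Suc p. (-1)^k * real (Suc p choose k) * ((-1)^l * real (Suc p choose l)
            * th (q+q+1) (real p + 1 - d - real (k + l))))
        = (\<Sum>m\<le>2 * Suc p. (-1)^m * real (2 * Suc p choose m) * th (q+q+1) (real p + 1 - d - real m))"
      by (rule cauchy_binom[of "Suc p" "\<lambda>m. th (q+q+1) (real p + 1 - d - real m)"])
    also have "((-1)^r / fact (q+q+1)) * \<dots> = (-1)^r * Pd (2*p+1) (2*r) (real p + 1 - (b - a))"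
    proof -
      have "2 * p + 1 - 2 * r = q + q + 1" "Suc (2 * p + 1) = 2 * Suc p" using assms unfolding q_def by auto
      then show ?thesis unfolding Pd_def d_def by (simp add: sum_divide_distrib)
    qed
    finally show ?thesis .
  qed
  show ?thesis using int unfolding prod[symmetric] val .
qed



definition phi :: "nat \<Rightarrow> nat \<Rightarrow> real \<Rightarrow> real" where
  "phi p r t = Pd p r (t + real (p div 2) + 1)"

definition ff :: "nat \<Rightarrow> nat \<Rightarrow> real \<Rightarrow> real \<Rightarrow> real \<Rightarrow> real" where
  "ff p r a b t = phi p r (t - a) * phi p r (t - b)"

definition Aval :: "nat \<Rightarrow> nat \<Rightarrow> real \<Rightarrow> real" where
  "Aval p r d = (-1)^r * Pd (2*p+1) (2*r) (real p + 1 - d)"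

lemma even_half: "even p \<Longrightarrow> real p = 2 * real (p div 2)"
  by (metis dvd_mult_div_cancel mult_2 of_nat_add)

lemma phi_lo: "t < - real (p div 2) - 1 \<Longrightarrow> phi p r t = 0"
  unfolding phi_def by (rule Pd_neg) simp

lemma phi_hi: "even p \<Longrightarrow> r \<le> p \<Longrightarrow> t > real (p div 2) \<Longrightarrow> phi p r t = 0"
  unfolding phi_def by (rule Pd_big) (auto dest: even_half)

lemma phi_sym: "even p \<Longrightarrow> r \<le> p \<Longrightarrow> phi p r (-1 - t) = (-1)^r * phi p r t"
proof -
  assume e: "even p" and r: "r \<le> p"
  have "phi p r t = (-1)^r * Pd p r (real p + 1 - (t + real (p div 2) + 1))"
    unfolding phi_def by (rule Pd_sym[OF r])
  also have "real p + 1 - (t + real (p div 2) + 1) = -1 - t + real (p div 2) + 1"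
    using even_half[OF e] by simp
  finally have "phi p r t = (-1)^r * phi p r (-1 - t)" unfolding phi_def .
  then have "(-1)^r * phi p r t = ((-1)^r * (-1)^r) * phi p r (-1 - t)" by simp
  then show ?thesis by (simp only: neg1_sq mult_1_left)
qed

lemma ff_UNIV:
  assumes "r \<le> p"
  shows "(ff p r a b has_integral Aval p r (a - b)) UNIV"
proof -
  have "((\<lambda>s. Pd p r (s + (real (p div 2) + 1 - a)) * Pd p r (s + (real (p div 2) + 1 - b))) has_integral
     ((-1)^r * Pd (2*p+1) (2*r) (real p + 1 - ((real (p div 2) + 1 - b) - (real (p div 2) + 1 - a))))) UNIV"
    by (rule Ad_has_integral[OF assms])
  moreover have "(\<lambda>s. Pd p r (s + (real (p div 2) + 1 - a)) * Pd p r (s + (real (p div 2) + 1 - b))) = ff p r a b"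
    unfolding ff_def phi_def by (auto simp: algebra_simps)
  moreover have "real p + 1 - ((real (p div 2) + 1 - b) - (real (p div 2) + 1 - a)) = real p + 1 - (a - b)" by simp
  ultimately show ?thesis unfolding Aval_def by simp
qed

lemma ff_integrable: "r \<le> p \<Longrightarrow> ff p r a b integrable_on {x..y}"
  using ff_UNIV integrable_on_subinterval by blast

lemma ff_refl0:
  assumes "even p" "r \<le> p"
  shows "ff p r a b (-t) = ff p r (1 - a) (1 - b) t"
proof -
  have "phi p r (-t - c) = (-1)^r * phi p r (t - (1 - c))" for c
  proof -
    have e: "-t - c = -1 - (t - (1 - c))" by simp
    show ?thesis by (simp only: e phi_sym[OF assms])
  qed
  then have "ff p r a b (-t) = ((-1)^r * (-1)^r) * ff p r (1 - a) (1 - b) t"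
    unfolding ff_def by (simp add: algebra_simps)
  then show ?thesis by (simp only: neg1_sq mult_1_left)
qed

lemma ff_reflN:
  assumes "even p" "r \<le> p"
  shows "ff p r a b (2 * N - t) = ff p r (2 * N + 1 - a) (2 * N + 1 - b) t"
proof -
  have "phi p r (2 * N - t - c) = (-1)^r * phi p r (t - (2 * N + 1 - c))" for c
  proof -
    have e: "2 * N - t - c = -1 - (t - (2 * N + 1 - c))" by simp
    show ?thesis by (simp only: e phi_sym[OF assms])
  qed
  then have "ff p r a b (2 * N - t) = ((-1)^r * (-1)^r) * ff p r (2 * N + 1 - a) (2 * N + 1 - b) t"
    unfolding ff_def by (simp add: algebra_simps)
  then show ?thesis by (simp only: neg1_sq mult_1_left)
qed

lemma fold3:
  fixes F :: "real \<Rightarrow> real"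
  assumes N: "0 \<le> N" "N \<le> L" and FV: "(F has_integral V) UNIV"
    and Fz: "\<And>t. t \<notin> {-L..L} \<Longrightarrow> F t = 0"
  shows "V = integral {0..L} (\<lambda>t. F (-t)) + integral {0..N} F + integral {2*N-L..N} (\<lambda>t. F (2*N - t))"
proof -
  have "(\<lambda>x. if x \<in> {-L..L} then F x else 0) = F" using Fz by auto
  then have iL: "(F has_integral V) {-L..L}" using FV has_integral_restrict_UNIV[of "{-L..L}" F V] by simp
  then have iF: "F integrable_on {-L..L}" by blast
  have iF2: "F integrable_on {0..L}" by (rule integrable_on_subinterval[OF iF]) (use N in auto)
  have "V = integral {-L..L} F" using iL by (simp add: integral_unique)
  also have "\<dots> = integral {-L..0} F + integral {0..L} F"
    using Henstock_Kurzweil_Integration.integral_combine[where a="-L" and c=0 and b=L and f=F] N iF by simp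
  also have "integral {0..L} F = integral {0..N} F + integral {N..L} F"
    using Henstock_Kurzweil_Integration.integral_combine[where a=0 and c=N and b=L and f=F] N iF2 by simp
  also have "integral {-L..0} F = integral {0..L} (\<lambda>t. F (-t))"
    using Henstock_Kurzweil_Integration.integral_reflect_real[of 0 "-L" F] by simp
  also have "integral {N..L} F = integral {2*N-L..N} (\<lambda>t. F (2*N - t))"
  proof -
    have "integral {N - 2*N..L - 2*N} (\<lambda>x. F (x + 2*N)) = integral {N..L} F"
      by (rule integral_shift_real_ivl)
    moreover have "integral {-(L - 2*N)..-(N - 2*N)} (\<lambda>x. (\<lambda>y. F (y + 2*N)) (-x)) = integral {N - 2*N..L - 2*N} (\<lambda>x. F (x + 2*N))"
      by (rule Henstock_Kurzweil_Integration.integral_reflect_real)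
    moreover have "{-(L - 2*N)..-(N - 2*N)} = {2*N-L..N}" by auto
    moreover have "(\<lambda>x. (\<lambda>y. F (y + 2*N)) (-x)) = (\<lambda>t. F (2*N - t))" by (auto simp: algebra_simps)
    ultimately show ?thesis by simp
  qed
  finally show ?thesis by simp
qed

lemma int_zero_on: "(\<And>t. t \<in> {a..b} \<Longrightarrow> g t = 0) \<Longrightarrow> integral {a..b} g = (0::real)"
  by (metis integral_0 integral_cong)

lemma int_cut_right:
  fixes g :: "real \<Rightarrow> real"
  assumes "a \<le> c" "c \<le> b" "g integrable_on {a..b}" "\<And>t. t \<in> {c..b} \<Longrightarrow> g t = 0"
  shows "integral {a..b} g = integral {a..c} g"
proof -
  have "integral {a..b} g = integral {a..c} g + integral {c..b} g"
    using Henstock_Kurzweil_Integration.integral_combine[where a=a and c=c and b=b and f=g] assms by simp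
  then show ?thesis using int_zero_on[of c b g] assms(4) by simp
qed

lemma int_cut_left:
  fixes g :: "real \<Rightarrow> real"
  assumes "a \<le> c" "c \<le> b" "g integrable_on {a..b}" "\<And>t. t \<in> {a..c} \<Longrightarrow> g t = 0"
  shows "integral {a..b} g = integral {c..b} g"
proof -
  have "integral {a..b} g = integral {a..c} g + integral {c..b} g"
    using Henstock_Kurzweil_Integration.integral_combine[where a=a and c=c and b=b and f=g] assms by simp
  then show ?thesis using int_zero_on[of a c g] assms(4) by simp
qed



definition Qf :: "nat \<Rightarrow> nat \<Rightarrow> nat \<Rightarrow> nat \<Rightarrow> real \<Rightarrow> real" where
  "Qf p r n i t = phi p r (t - real i) - phi p r (t - (1 - real i)) - phi p r (t - (2 * real n + 1 - real i))"

lemma ff_zero1: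
  assumes "even p" "r \<le> p" "t < a - real (p div 2) - 1 \<or> t > a + real (p div 2)"
  shows "ff p r a b t = 0"
proof -
  have "phi p r (t - a) = 0"
    using assms phi_lo[of "t - a" p r] phi_hi[of p r "t - a"] by auto
  then show ?thesis unfolding ff_def by simp
qed

lemma ff_zero2:
  assumes "even p" "r \<le> p" "t < b - real (p div 2) - 1 \<or> t > b + real (p div 2)"
  shows "ff p r a b t = 0"
proof -
  have "phi p r (t - b) = 0"
    using assms phi_lo[of "t - b" p r] phi_hi[of p r "t - b"] by auto
  then show ?thesis unfolding ff_def by simp
qed

lemma fold_app:
  assumes ep: "even p" and rp: "r \<le> p" and N: "N \<ge> 0" and a: "-N \<le> a" "a \<le> 2*N"
    and L_def: "L = 2*N + real (p div 2) + 2"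
  shows "Aval p r (a - b) = integral {0..L} (ff p r (1 - a) (1 - b)) + integral {0..N} (ff p r a b)
           + integral {2*N-L..N} (ff p r (2*N + 1 - a) (2*N + 1 - b))"
proof -
  have "Aval p r (a - b) = integral {0..L} (\<lambda>t. ff p r a b (-t)) + integral {0..N} (ff p r a b)
     + integral {2*N-L..N} (\<lambda>t. ff p r a b (2*N - t))"
  proof (rule fold3)
    show "0 \<le> N" "N \<le> L" using N unfolding L_def by auto
    show "(ff p r a b has_integral Aval p r (a - b)) UNIV" by (rule ff_UNIV[OF rp])
    fix t assume "t \<notin> {-L..L}"
    then have "t < a - real (p div 2) - 1 \<or> t > a + real (p div 2)" using a N unfolding L_def by auto
    then show "ff p r a b t = 0" by (rule ff_zero1[OF ep rp])
  qed
  moreover have "(\<lambda>t. ff p r a b (-t)) = ff p r (1 - a) (1 - b)" by (rule ext) (rule ff_refl0[OF ep rp])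
  moreover have "(\<lambda>t. ff p r a b (2*N - t)) = ff p r (2*N + 1 - a) (2*N + 1 - b)" by (rule ext) (rule ff_reflN[OF ep rp])
  ultimately show ?thesis by simp
qed

lemma Q_integral:
  assumes ep: "even p" and p1: "p \<ge> 1" and nb: "n \<ge> p + p div 2" and rp: "r \<le> p"
    and i: "1 \<le> i" "i \<le> n" and j: "1 \<le> j" "j \<le> n"
  shows "integral {0..real n} (\<lambda>t. Qf p r n i t * Qf p r n j t)
       = Aval p r (real i - real j) - Aval p r (real i + real j - 1) - Aval p r (real i + real j - 1 - 2 * real n)"
proof -
  define N where "N = real n"
  define h where "h = real (p div 2)"
  define L where "L = 2*N + h + 2"
  define I where "I a b = integral {0..N} (ff p r a b)" for a b
  have h1: "h \<ge> 1" unfolding h_def using p1 ep by (cases "p div 2") (auto elim: evenE)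
  have hN: "3 * h \<le> N" unfolding h_def N_def using nb ep by (auto elim!: evenE)
  have iN: "1 \<le> real i" "real i \<le> N" "1 \<le> real j" "real j \<le> N" using i j unfolding N_def by auto
  have N0: "N \<ge> 0" unfolding N_def by simp
  have L0: "N \<le> L" "2*N - L \<le> 0" unfolding L_def using h1 N0 by auto
  have intg: "ff p r a b integrable_on {x..y}" for a b x y by (rule ff_integrable[OF rp])
  note z1 = ff_zero1[OF ep rp, folded h_def]
  note z2 = ff_zero2[OF ep rp, folded h_def]
  have Ld: "L = 2*N + real (p div 2) + 2" unfolding L_def h_def ..
  have A: "Aval p r (real i - real j) = I (1 - real i) (1 - real j) + I (real i) (real j)
              + I (2*N + 1 - real i) (2*N + 1 - real j)"
  proof -
    have "Aval p r (real i - real j) = integral {0..L} (ff p r (1 - real i) (1 - real j)) + I (real i) (real j)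
       + integral {2*N-L..N} (ff p r (2*N + 1 - real i) (2*N + 1 - real j))"
      unfolding I_def by (rule fold_app[OF ep rp N0 _ _ Ld]) (use iN in auto)
    moreover have "integral {0..L} (ff p r (1 - real i) (1 - real j)) = I (1 - real i) (1 - real j)"
      unfolding I_def by (rule int_cut_right[OF _ _ intg]) (use L0 N0 hN h1 iN in \<open>auto intro!: z1\<close>)
    moreover have "integral {2*N-L..N} (ff p r (2*N + 1 - real i) (2*N + 1 - real j)) = I (2*N + 1 - real i) (2*N + 1 - real j)"
      unfolding I_def by (rule int_cut_left[OF _ _ intg]) (use L0 N0 hN h1 iN in \<open>auto intro!: z1\<close>)
    ultimately show ?thesis by simp
  qed
  have B: "Aval p r (real i + real j - 1) = I (1 - real i) (real j) + I (real i) (1 - real j)"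
  proof -
    have "Aval p r (real i - (1 - real j)) = integral {0..L} (ff p r (1 - real i) (1 - (1 - real j))) + I (real i) (1 - real j)
       + integral {2*N-L..N} (ff p r (2*N + 1 - real i) (2*N + 1 - (1 - real j)))"
      unfolding I_def by (rule fold_app[OF ep rp N0 _ _ Ld]) (use iN in auto)
    moreover have "integral {0..L} (ff p r (1 - real i) (1 - (1 - real j))) = I (1 - real i) (real j)"
      unfolding I_def by simp (rule int_cut_right[OF _ _ intg], use L0 N0 hN h1 iN in \<open>auto intro!: z1\<close>)
    moreover have "integral {2*N-L..N} (ff p r (2*N + 1 - real i) (2*N + 1 - (1 - real j))) = 0"
      by (rule int_zero_on) (use L0 N0 hN h1 iN in \<open>auto intro!: z2\<close>)
    ultimately show ?thesis by (simp add: algebra_simps)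
  qed
  have C: "Aval p r (real i + real j - 1 - 2 * real n) = I (real i) (2*N + 1 - real j) + I (2*N + 1 - real i) (real j)"
  proof -
    have "Aval p r (real i - (2*N + 1 - real j)) = integral {0..L} (ff p r (1 - real i) (1 - (2*N + 1 - real j))) + I (real i) (2*N + 1 - real j)
       + integral {2*N-L..N} (ff p r (2*N + 1 - real i) (2*N + 1 - (2*N + 1 - real j)))"
      unfolding I_def by (rule fold_app[OF ep rp N0 _ _ Ld]) (use iN in auto)
    moreover have "integral {0..L} (ff p r (1 - real i) (1 - (2*N + 1 - real j))) = 0"
      by (rule int_zero_on) (use L0 N0 hN h1 iN in \<open>auto intro!: z2\<close>)
    moreover have "integral {2*N-L..N} (ff p r (2*N + 1 - real i) (2*N + 1 - (2*N + 1 - real j))) = I (2*N + 1 - real i) (real j)"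
      unfolding I_def by simp (rule int_cut_left[OF _ _ intg], use L0 N0 hN h1 iN in \<open>auto intro!: z1\<close>)
    ultimately show ?thesis unfolding N_def by (simp add: algebra_simps)
  qed
  have D1: "ff p r (1 - real i) (2*N + 1 - real j) t = 0" for t
  proof (cases "t > 1 - real i + h")
    case True then show ?thesis by (intro z1) auto
  next
    case False then show ?thesis using hN h1 iN by (intro z2) auto
  qed
  have D2: "ff p r (2*N + 1 - real i) (1 - real j) t = 0" for t
  proof (cases "t > 1 - real j + h")
    case True then show ?thesis by (intro z2) auto
  next
    case False then show ?thesis using hN h1 iN by (intro z1) auto
  qed
  define a1 a2 a3 b1 b2 b3 where "a1 = real i" "a2 = 1 - real i" "a3 = 2*N + 1 - real i"
     "b1 = real j" "b2 = 1 - real j" "b3 = 2*N + 1 - real j"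
  have E: "Qf p r n i t * Qf p r n j t = ff p r a1 b1 t - ff p r a1 b2 t - ff p r a1 b3 t - ff p r a2 b1 t
      + ff p r a2 b2 t + ff p r a2 b3 t - ff p r a3 b1 t + ff p r a3 b2 t + ff p r a3 b3 t" for t
    unfolding Qf_def ff_def a1_a2_a3_b1_b2_b3_def N_def by (simp add: algebra_simps)
  have "((\<lambda>t. ff p r a1 b1 t - ff p r a1 b2 t - ff p r a1 b3 t - ff p r a2 b1 t
      + ff p r a2 b2 t + ff p r a2 b3 t - ff p r a3 b1 t + ff p r a3 b2 t + ff p r a3 b3 t) has_integral
      (I a1 b1 - I a1 b2 - I a1 b3 - I a2 b1 + I a2 b2 + I a2 b3 - I a3 b1 + I a3 b2 + I a3 b3)) {0..N}"
    unfolding I_def by (intro has_integral_add has_integral_diff integrable_integral intg)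
  then have "integral {0..N} (\<lambda>t. Qf p r n i t * Qf p r n j t)
     = I a1 b1 - I a1 b2 - I a1 b3 - I a2 b1 + I a2 b2 + I a2 b3 - I a3 b1 + I a3 b2 + I a3 b3"
    unfolding E by (rule integral_unique)
  moreover have "I a2 b3 = 0" "I a3 b2 = 0"
    unfolding I_def a1_a2_a3_b1_b2_b3_def using D1 D2 by (auto intro: int_zero_on)
  ultimately show ?thesis using A B C unfolding a1_a2_a3_b1_b2_b3_def N_def[symmetric] by (simp add: algebra_simps)
qed



lemma Q_integrable:
  assumes rp: "r \<le> p"
  shows "(\<lambda>t. Qf p r n i t * Qf p r n j t) integrable_on {x..y}"
proof -
  define a1 a2 a3 b1 b2 b3 where "a1 = real i" "a2 = 1 - real i" "a3 = 2*real n + 1 - real i"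
     "b1 = real j" "b2 = 1 - real j" "b3 = 2*real n + 1 - real j"
  have E: "(\<lambda>t. Qf p r n i t * Qf p r n j t) = (\<lambda>t. ff p r a1 b1 t - ff p r a1 b2 t - ff p r a1 b3 t - ff p r a2 b1 t
      + ff p r a2 b2 t + ff p r a2 b3 t - ff p r a3 b1 t + ff p r a3 b2 t + ff p r a3 b3 t)"
    unfolding Qf_def ff_def a1_a2_a3_b1_b2_b3_def by (rule ext) (simp add: algebra_simps)
  have intg: "ff p r a b integrable_on {x..y}" for a b by (rule ff_integrable[OF rp])
  show ?thesis unfolding E by (intro integrable_add integrable_diff intg)
qed

lemma cardB_zero: "p \<noteq> 0 \<Longrightarrow> u < 0 \<or> u > real p + 1 \<Longrightarrow> cardB p u = 0"
  using Pd0[of p u] Pd_neg[of u p 0] Pd_big[of 0 p u] by auto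

lemma Nbar_local:
  assumes ep: "even p" and p1: "p \<ge> 1" and nb: "n \<ge> p + p div 2" and i: "1 \<le> i" "i \<le> n"
    and x: "-1/2 < x" "x < 3/2"
  shows "Nbar p n i x = cardB p (real n * x - real i + real (p div 2) + 1)
      - cardB p (real n * x - (1 - real i) + real (p div 2) + 1)
      - cardB p (real n * x - (2 * real n + 1 - real i) + real (p div 2) + 1)"
proof -
  define h where "h = real (p div 2)"
  have hp: "real p = 2 * h" unfolding h_def by (rule even_half[OF ep])
  have h1: "h \<ge> 1" unfolding h_def using p1 ep by (cases "p div 2") (auto elim: evenE)
  have hN: "3 * h \<le> real n" unfolding h_def using nb ep by (auto elim!: evenE)
  have p0: "p \<noteq> 0" using p1 by simp
  have iN: "1 \<le> real i" "real i \<le> real n" using i by auto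
  define T where "T m = Cshift p n (real i - 1/2 + 2 * of_int m * real n) x
      - Cshift p n (-(real i - 1/2) + 2 * of_int m * real n) x" for m :: int
  have CA: "Cshift p n (real i - 1/2 + 2 * of_int m * real n) x = cardB p (real n * x - real i - 2 * of_int m * real n + h + 1)" for m
  proof -
    have "real n * x - (real i - 1/2 + 2 * of_int m * real n) + (real p + 1) / 2 = real n * x - real i - 2 * of_int m * real n + h + 1"
      unfolding hp by (simp add: field_simps)
    then show ?thesis unfolding Cshift_def by (simp only:)
  qed
  have CB: "Cshift p n (-(real i - 1/2) + 2 * of_int m * real n) x = cardB p (real n * x + real i - 2 * of_int m * real n + h)" for m
  proof -
    have "real n * x - (-(real i - 1/2) + 2 * of_int m * real n) + (real p + 1) / 2 = real n * x + real i - 2 * of_int m * real n + h"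
      unfolding hp by (simp add: field_simps)
    then show ?thesis unfolding Cshift_def by (simp only:)
  qed
  have npos: "real n > 0" using hN h1 by linarith
  have nx: "- real n / 2 < real n * x" "real n * x < 3 * real n / 2"
    using mult_strict_left_mono[OF x(1) npos] mult_strict_left_mono[OF x(2) npos] x by auto
  have m1: "real_of_int m * real n \<ge> real n" if "m \<ge> 1" for m
    using that by (simp add: mult_right_mono[of 1 "real_of_int m" "real n", simplified])
  have m2: "real_of_int m * real n \<ge> 2 * real n" if "m \<ge> 2" for m
    using that mult_right_mono[of 2 "real_of_int m" "real n"] by simp
  have m3: "real_of_int m * real n \<le> - real n" if "m \<le> -1" for m
    using that mult_right_mono[of "real_of_int m" "-1" "real n"] by simp
  have A0: "cardB p (real n * x - real i - 2 * of_int m * real n + h + 1) = 0" if m0: "m \<noteq> 0" for m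
  proof (rule cardB_zero[OF p0])
    have dj: "m \<ge> 1 \<or> m \<le> -1" using m0 by presburger
    then consider "m \<ge> 1" | "m \<le> -1" by blast
    then show "real n * x - real i - 2 * of_int m * real n + h + 1 < 0 \<or> real n * x - real i - 2 * of_int m * real n + h + 1 > real p + 1"
    proof cases
      case 1 then show ?thesis using m1[OF 1] nx iN hN h1 by (intro disjI1) linarith
    next
      case 2 then show ?thesis using m3[OF 2] nx iN hN h1 hp by (intro disjI2) linarith
    qed
  qed
  have B0: "cardB p (real n * x + real i - 2 * of_int m * real n + h) = 0" if m0: "m \<noteq> 0" "m \<noteq> 1" for m
  proof (rule cardB_zero[OF p0])
    have dj: "m \<ge> 2 \<or> m \<le> -1" using m0 by presburger
    then consider "m \<ge> 2" | "m \<le> -1" by blast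
    then show "real n * x + real i - 2 * of_int m * real n + h < 0 \<or> real n * x + real i - 2 * of_int m * real n + h > real p + 1"
    proof cases
      case 1 then show ?thesis using m2[OF 1] nx iN hN h1 by (intro disjI1) linarith
    next
      case 2 then show ?thesis using m3[OF 2] nx iN hN h1 hp by (intro disjI2) linarith
    qed
  qed
  have Tz: "T m = 0" if "m \<notin> {0, 1}" for m
  proof -
    have "m \<noteq> 0" "m \<noteq> 1" using that by auto
    then show ?thesis unfolding T_def CA CB using A0 B0 by simp
  qed
  have "Nbar p n i x = infsum T UNIV" unfolding Nbar_def T_def ..
  also have "\<dots> = infsum T {0, 1}"
    by (rule infsum_cong_neutral) (use Tz in auto)
  also have "\<dots> = T 0 + T 1" by simp
  also have "\<dots> = cardB p (real n * x - real i + h + 1) - cardB p (real n * x + real i + h)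
       - cardB p (real n * x + real i - 2 * real n + h)"
    unfolding T_def CA CB using A0[of 1] by simp
  finally show ?thesis unfolding h_def[symmetric] by (simp add: algebra_simps)
qed

lemma phi_comp_deriv:
  assumes jp: "j < p" and ep: "even p" and nx: "real n * x \<notin> \<int>" and c: "c \<in> \<int>"
  shows "((\<lambda>x. phi p j (real n * x - c)) has_real_derivative (phi p (Suc j) (real n * x - c) * real n)) (at x)"
proof -
  define s where "s = real n * x - c + real (p div 2) + 1"
  have sZ: "s \<notin> \<int>"
  proof
    assume "s \<in> \<int>"
    then have "s + c - real (p div 2) - 1 \<in> \<int>" using c by (intro Ints_diff Ints_add) auto
    then show False using nx unfolding s_def by simp
  qed
  have d1: "(Pd p j has_real_derivative Pd p (Suc j) s) (at s)" by (rule Pd_deriv[OF jp]) (use sZ in auto)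
  have d2: "((\<lambda>x. real n * x - c + real (p div 2) + 1) has_real_derivative real n) (at x)"
    by (auto intro!: derivative_eq_intros)
  have "((\<lambda>x. Pd p j (real n * x - c + real (p div 2) + 1)) has_real_derivative Pd p (Suc j) s * real n) (at x)"
    using DERIV_chain2[where f="Pd p j" and g="\<lambda>x. real n * x - c + real (p div 2) + 1", OF _ d2] d1
    unfolding s_def by blast
  then show ?thesis unfolding phi_def s_def .
qed

lemma Nbar_nderiv:
  assumes ep: "even p" and p1: "p \<ge> 1" and nb: "n \<ge> p + p div 2" and i: "1 \<le> i" "i \<le> n" and rp: "r \<le> p"
    and x: "-1/2 < x" "x < 3/2" "real n * x \<notin> \<int>"
  shows "nderiv r (Nbar p n i) x = real n ^ r * Qf p r n i (real n * x)"
proof (rule nderiv_local[where V="{x. -1/2 < x \<and> x < 3/2 \<and> real n * x \<notin> \<int>}" and r=r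
     and G="\<lambda>j x. real n ^ j * Qf p j n i (real n * x)"])
  show "open {x. -1/2 < x \<and> x < 3/2 \<and> real n * x \<notin> \<int>}"
  proof -
    have "closed ((\<lambda>x. real n * x) -` \<int>)"
      by (rule continuous_closed_vimage) (auto intro!: continuous_intros)
    then have o: "open (- ((\<lambda>x. real n * x) -` \<int>))" by (simp add: open_Compl)
    have "{x. -1/2 < x \<and> x < 3/2 \<and> real n * x \<notin> \<int>} = {-1/2<..<3/2} \<inter> - ((\<lambda>x. real n * x) -` \<int>)" by auto
    then show ?thesis using o by (simp add: open_Int)
  qed
  show "Nbar p n i y = real n ^ 0 * Qf p 0 n i (real n * y)" if "y \<in> {x. -1/2 < x \<and> x < 3/2 \<and> real n * x \<notin> \<int>}" for y
  proof -
    have p0: "p \<noteq> 0" using p1 by simp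
    have e: "Nbar p n i y = cardB p (real n * y - real i + real (p div 2) + 1)
      - cardB p (real n * y - (1 - real i) + real (p div 2) + 1)
      - cardB p (real n * y - (2 * real n + 1 - real i) + real (p div 2) + 1)"
      using that by (intro Nbar_local[OF ep p1 nb i]) auto
    show ?thesis unfolding e Qf_def phi_def by (simp only: Pd0[OF p0] power_0 mult_1_left)
  qed
  show "((\<lambda>x. real n ^ j * Qf p j n i (real n * x)) has_real_derivative real n ^ Suc j * Qf p (Suc j) n i (real n * y)) (at y)"
    if "j < r" "y \<in> {x. -1/2 < x \<and> x < 3/2 \<and> real n * x \<notin> \<int>}" for j y
  proof -
    have jp: "j < p" using that rp by simp
    have ny: "real n * y \<notin> \<int>" using that by simp
    have d: "((\<lambda>x. phi p j (real n * x - c)) has_real_derivative (phi p (Suc j) (real n * y - c) * real n)) (at y)"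
      if "c \<in> \<int>" for c by (rule phi_comp_deriv[OF jp ep ny that])
    have d3: "((\<lambda>x. real n ^ j * (phi p j (real n * x - real i) - phi p j (real n * x - (1 - real i))
          - phi p j (real n * x - (2 * real n + 1 - real i)))) has_real_derivative
       real n ^ j * (phi p (Suc j) (real n * y - real i) * real n - phi p (Suc j) (real n * y - (1 - real i)) * real n
          - phi p (Suc j) (real n * y - (2 * real n + 1 - real i)) * real n)) (at y)"
      by (intro DERIV_cmult DERIV_diff d) auto
    show ?thesis unfolding Qf_def using d3 by (simp add: algebra_simps)
  qed
qed (use x rp in auto)



lemma Xbar_formula:
  assumes ep: "even p" and p1: "p \<ge> 1" and nb: "n \<ge> p + p div 2" and rp: "r \<le> p"
    and i: "1 \<le> i" "i \<le> n" and j: "1 \<le> j" "j \<le> n"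
  shows "Xbar p r n i j = real n ^ (2*r) / real n *
     (Aval p r (real i - real j) - Aval p r (real i + real j - 1) - Aval p r (real i + real j - 1 - 2 * real n))"
proof -
  have npos: "real n > 0" using i by simp
  define S where "S = (\<lambda>k. real k / real n) ` {0..n}"
  have finS: "finite S" unfolding S_def by simp
  have good: "-1/2 < x \<and> x < 3/2 \<and> real n * x \<notin> \<int>" if "x \<in> {0..1} - S" for x
  proof -
    have x01: "0 \<le> x" "x \<le> 1" "x \<notin> S" using that by auto
    have "real n * x \<notin> \<int>"
    proof
      assume "real n * x \<in> \<int>"
      then obtain m where m: "real n * x = of_int m" by (auto elim: Ints_cases)
      have "0 \<le> real n * x" using x01 npos by simp
      then have m0: "m \<ge> 0" using m by simp
      have "real n * x \<le> real n" using x01 npos mult_left_le[of x "real n"] by simp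
      then have mn: "m \<le> int n" using m by simp
      have "x = real (nat m) / real n" using m m0 npos by (simp add: field_simps)
      moreover have "nat m \<in> {0..n}" using mn m0 by auto
      ultimately have "x \<in> S" unfolding S_def by blast
      then show False using x01 by simp
    qed
    then show ?thesis using x01 by simp
  qed
  have "Xbar p r n i j = integral {0..1} (\<lambda>x. real n ^ (2*r) * (Qf p r n i (real n * x) * Qf p r n j (real n * x)))"
    unfolding Xbar_def
  proof (rule integral_spike[OF negligible_finite[OF finS]])
    fix x assume "x \<in> {0..1} - S"
    then have g: "-1/2 < x" "x < 3/2" "real n * x \<notin> \<int>" using good by auto
    show "real n ^ (2*r) * (Qf p r n i (real n * x) * Qf p r n j (real n * x)) = nderiv r (Nbar p n i) x * nderiv r (Nbar p n j) x"
      unfolding Nbar_nderiv[OF ep p1 nb i rp g] Nbar_nderiv[OF ep p1 nb j rp g]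
      by (simp add: power_mult_distrib mult_ac power2_eq_square flip: power_add mult_2)
  qed
  also have "\<dots> = real n ^ (2*r) * (integral {0..real n} (\<lambda>t. Qf p r n i t * Qf p r n j t) / real n)"
  proof -
    define J where "J = integral {0..real n} (\<lambda>t. Qf p r n i t * Qf p r n j t)"
    have H: "((\<lambda>t. Qf p r n i t * Qf p r n j t) has_integral J) {0..real n}"
      unfolding J_def by (rule integrable_integral[OF Q_integrable[OF rp]])
    have H2: "((\<lambda>x. Qf p r n i (real n * x) * Qf p r n j (real n * x)) has_integral (1 / \<bar>real n\<bar>) *\<^sub>R J) ((\<lambda>x. x / real n) ` {0..real n})"
      by (rule has_integral_stretch_real[OF H]) (use npos in simp)
    have img: "(\<lambda>x. x / real n) ` {0..real n} = {0..1}"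
    proof
      show "(\<lambda>x. x / real n) ` {0..real n} \<subseteq> {0..1}" using npos by auto
      show "{0..1} \<subseteq> (\<lambda>x. x / real n) ` {0..real n}"
      proof
        fix y :: real assume "y \<in> {0..1}"
        then have "y * real n \<in> {0..real n}" "y = (y * real n) / real n"
          using npos mult_left_le[of y "real n"] by (auto simp: field_simps)
        then show "y \<in> (\<lambda>x. x / real n) ` {0..real n}" by blast
      qed
    qed
    have "((\<lambda>x. real n ^ (2*r) * (Qf p r n i (real n * x) * Qf p r n j (real n * x))) has_integral real n ^ (2*r) * (J / real n)) {0..1}"
      using has_integral_mult_right[OF H2[unfolded img], of "real n ^ (2*r)"] npos by simp
    then show ?thesis unfolding J_def[symmetric] by (rule integral_unique)
  qed
  also have "integral {0..real n} (\<lambda>t. Qf p r n i t * Qf p r n j t)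
      = Aval p r (real i - real j) - Aval p r (real i + real j - 1) - Aval p r (real i + real j - 1 - 2 * real n)"
    by (rule Q_integral[OF ep p1 nb rp i j])
  finally show ?thesis by simp
qed



lemma eig_sum:
  fixes Av :: "int \<Rightarrow> real" and N :: int and p :: nat and \<theta> :: real and i :: int
  assumes sym: "\<And>d. Av (-d) = Av d" and zero: "\<And>d. d > int p \<Longrightarrow> Av d = 0"
    and Np: "int p \<le> N" and i: "1 \<le> i" "i \<le> N"
    and per: "\<And>k. sin (\<theta> * (of_int (2*N + 1 - k) - 1/2)) = - sin (\<theta> * (of_int k - 1/2))"
  shows "(\<Sum>j\<in>{1..N}. (Av (i - j) - Av (i + j - 1) - Av (i + j - 1 - 2*N)) * sin (\<theta> * (of_int j - 1/2)))
      = (Av 0 + 2 * (\<Sum>d\<in>{1..int p}. Av d * cos (of_int d * \<theta>))) * sin (\<theta> * (of_int i - 1/2))"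
proof -
  define s where "s k = sin (\<theta> * (of_int k - 1/2))" for k :: int
  have s1: "s (1 - k) = - s k" for k
  proof -
    have "\<theta> * (of_int (1 - k) - 1/2) = - (\<theta> * (of_int k - 1/2))" by (simp add: algebra_simps)
    then show ?thesis unfolding s_def by simp
  qed
  have s2: "s (2*N + 1 - k) = - s k" for k unfolding s_def by (rule per)
  have zero': "Av d = 0" if "d < - int p" for d
    using zero[of "-d"] sym[of d] that by simp
  have T2: "(\<Sum>j\<in>{1..N}. Av (i + j - 1) * s j) = - (\<Sum>k\<in>{1-N..0}. Av (i - k) * s k)"
  proof -
    have "(\<Sum>k\<in>{1-N..0}. Av (i - k) * s k) = (\<Sum>j\<in>{1..N}. Av (i - (1 - j)) * s (1 - j))"
      by (rule sum.reindex_bij_witness[where i="\<lambda>k. 1 - k" and j="\<lambda>k. 1 - k"]) auto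
    also have "\<dots> = - (\<Sum>j\<in>{1..N}. Av (i + j - 1) * s j)"
      by (simp add: s1 sum_negf algebra_simps)
    finally show ?thesis by simp
  qed
  have T3: "(\<Sum>j\<in>{1..N}. Av (i + j - 1 - 2*N) * s j) = - (\<Sum>k\<in>{N+1..2*N}. Av (i - k) * s k)"
  proof -
    have "(\<Sum>k\<in>{N+1..2*N}. Av (i - k) * s k) = (\<Sum>j\<in>{1..N}. Av (i - (2*N + 1 - j)) * s (2*N + 1 - j))"
      by (rule sum.reindex_bij_witness[where i="\<lambda>k. 2*N + 1 - k" and j="\<lambda>k. 2*N + 1 - k"]) auto
    also have "\<dots> = - (\<Sum>j\<in>{1..N}. Av (i + j - 1 - 2*N) * s j)"
      unfolding s2 by (simp add: sum_negf algebra_simps)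
    finally show ?thesis by simp
  qed
  have "(\<Sum>j\<in>{1..N}. (Av (i - j) - Av (i + j - 1) - Av (i + j - 1 - 2*N)) * s j)
      = (\<Sum>j\<in>{1..N}. Av (i - j) * s j) - (\<Sum>j\<in>{1..N}. Av (i + j - 1) * s j) - (\<Sum>j\<in>{1..N}. Av (i + j - 1 - 2*N) * s j)"
    by (simp add: sum_subtractf left_diff_distrib)
  also have "\<dots> = (\<Sum>k\<in>{1-N..0}. Av (i - k) * s k) + (\<Sum>k\<in>{1..N}. Av (i - k) * s k) + (\<Sum>k\<in>{N+1..2*N}. Av (i - k) * s k)"
    unfolding T2 T3 by simp
  also have "\<dots> = (\<Sum>k\<in>{1-N..2*N}. Av (i - k) * s k)"
  proof -
    have u1: "{1-N..0} \<union> {1..N} = {1-N..N}" using i by auto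
    have u2: "{1-N..N} \<union> {N+1..2*N} = {1-N..2*N}" using i by auto
    have "(\<Sum>k\<in>{1-N..N}. Av (i - k) * s k) = (\<Sum>k\<in>{1-N..0}. Av (i - k) * s k) + (\<Sum>k\<in>{1..N}. Av (i - k) * s k)"
      unfolding u1[symmetric] by (rule sum.union_disjoint) auto
    moreover have "(\<Sum>k\<in>{1-N..2*N}. Av (i - k) * s k) = (\<Sum>k\<in>{1-N..N}. Av (i - k) * s k) + (\<Sum>k\<in>{N+1..2*N}. Av (i - k) * s k)"
      unfolding u2[symmetric] by (rule sum.union_disjoint) auto
    ultimately show ?thesis by simp
  qed
  also have "\<dots> = (\<Sum>d\<in>{i-2*N..i+N-1}. Av d * s (i - d))"
    by (rule sum.reindex_bij_witness[where i="\<lambda>d. i - d" and j="\<lambda>k. i - k"]) auto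
  also have "\<dots> = (\<Sum>d\<in>{-int p..int p}. Av d * s (i - d))"
  proof (rule sum.mono_neutral_right)
    show "{-int p..int p} \<subseteq> {i-2*N..i+N-1}" using i Np by auto
    show "\<forall>d\<in>{i-2*N..i+N-1} - {-int p..int p}. Av d * s (i - d) = 0"
      using zero zero' by fastforce
  qed simp
  also have "\<dots> = (\<Sum>d\<in>{-int p..-1}. Av d * s (i - d)) + Av 0 * s i + (\<Sum>d\<in>{1..int p}. Av d * s (i - d))"
  proof -
    have u: "{-int p..int p} = {-int p..-1} \<union> ({0} \<union> {1..int p})" by auto
    show ?thesis unfolding u by (subst sum.union_disjoint, auto)+
  qed
  also have "(\<Sum>d\<in>{-int p..-1}. Av d * s (i - d)) = (\<Sum>d\<in>{1..int p}. Av d * s (i + d))"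
    by (rule sum.reindex_bij_witness[where i="\<lambda>d. - d" and j="\<lambda>d. - d"]) (auto simp: sym)
  also have "(\<Sum>d\<in>{1..int p}. Av d * s (i + d)) + Av 0 * s i + (\<Sum>d\<in>{1..int p}. Av d * s (i - d))
      = Av 0 * s i + (\<Sum>d\<in>{1..int p}. Av d * (s (i - d) + s (i + d)))"
    by (simp add: sum.distrib algebra_simps)
  also have "(\<Sum>d\<in>{1..int p}. Av d * (s (i - d) + s (i + d))) = (\<Sum>d\<in>{1..int p}. 2 * (Av d * cos (of_int d * \<theta>)) * s i)"
  proof (rule sum.cong[OF refl])
    fix d
    have a: "\<theta> * (of_int (i - d) - 1/2) = \<theta> * (of_int i - 1/2) - of_int d * \<theta>" by (simp add: algebra_simps)
    have b: "\<theta> * (of_int (i + d) - 1/2) = \<theta> * (of_int i - 1/2) + of_int d * \<theta>" by (simp add: algebra_simps)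
    show "Av d * (s (i - d) + s (i + d)) = 2 * (Av d * cos (of_int d * \<theta>)) * s i"
      unfolding s_def a b sin_add sin_diff by (simp add: algebra_simps)
  qed
  finally show ?thesis unfolding s_def[symmetric] by (simp add: sum_distrib_left sum_distrib_right algebra_simps)
qed



lemma cos_tele: "2 * sin (\<phi>/2) * (\<Sum>l\<in>{1..M}. cos (real l * \<phi>)) = sin ((real M + 1/2) * \<phi>) - sin (\<phi>/2)"
proof (induction M)
  case 0 then show ?case by simp
next
  case (Suc M)
  have "2 * sin (\<phi>/2) * cos (real (Suc M) * \<phi>) = sin ((real (Suc M) + 1/2) * \<phi>) - sin ((real M + 1/2) * \<phi>)"
  proof -
    have a: "(real (Suc M) + 1/2) * \<phi> = real (Suc M) * \<phi> + \<phi>/2" by (simp add: algebra_simps)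
    have b: "(real M + 1/2) * \<phi> = real (Suc M) * \<phi> - \<phi>/2" by (simp add: algebra_simps)
    show ?thesis unfolding a b sin_add sin_diff by (simp add: algebra_simps)
  qed
  then show ?case using Suc.IH by (simp add: algebra_simps)
qed

definition wt :: "nat \<Rightarrow> nat \<Rightarrow> real" where "wt N l = (if l = N then 1/2 else 1)"

lemma Dsum_pos:
  fixes N m :: nat
  assumes "0 < m" "m < 2 * N"
  shows "(\<Sum>l\<in>{1..N}. wt N l * cos (real l * (pi * real m / real N))) = -1/2"
proof -
  define \<phi> where "\<phi> = pi * real m / real N"
  have N0: "N \<ge> 1" using assms by simp
  have sp: "sin (\<phi>/2) > 0"
  proof (rule sin_gt_zero)
    show "0 < \<phi>/2" unfolding \<phi>_def using assms by simp
    have "real m < 2 * real N" using assms by simp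
    then have "pi * real m < pi * (2 * real N)" by simp
    then show "\<phi>/2 < pi" unfolding \<phi>_def using N0 by (simp add: field_simps)
  qed
  have Nphi: "real N * \<phi> = real m * pi" unfolding \<phi>_def using N0 by simp
  have split: "(\<Sum>l\<in>{1..N}. wt N l * cos (real l * \<phi>)) = (\<Sum>l\<in>{1..N-1}. cos (real l * \<phi>)) + cos (real N * \<phi>) / 2"
  proof -
    have u: "{1..N} = insert N {1..N-1}" using N0 by auto
    have "(\<Sum>l\<in>{1..N-1}. wt N l * cos (real l * \<phi>)) = (\<Sum>l\<in>{1..N-1}. cos (real l * \<phi>))"
      by (rule sum.cong) (auto simp: wt_def)
    moreover have nin: "N \<notin> {1..N-1}" using N0 by auto
    ultimately show ?thesis unfolding u by (simp add: sum.insert[OF _ nin] wt_def)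
  qed
  have t: "2 * sin (\<phi>/2) * (\<Sum>l\<in>{1..N-1}. cos (real l * \<phi>)) = sin ((real (N-1) + 1/2) * \<phi>) - sin (\<phi>/2)"
    by (rule cos_tele)
  have e1: "(real (N-1) + 1/2) * \<phi> = real m * pi - \<phi>/2" using N0 Nphi by (simp add: of_nat_diff algebra_simps)
  have e2: "sin (real m * pi - \<phi>/2) = - ((-1)^m * sin (\<phi>/2))" by (simp add: sin_diff)
  have eq: "2 * sin (\<phi>/2) * (\<Sum>l\<in>{1..N}. wt N l * cos (real l * \<phi>)) = 2 * sin (\<phi>/2) * (-1/2)"
    unfolding split using t unfolding e1 e2 Nphi by (simp add: algebra_simps)
  have c0: "2 * sin (\<phi>/2) \<noteq> 0" using sp by simp
  have "(\<Sum>l\<in>{1..N}. wt N l * cos (real l * \<phi>)) = -1/2" using eq c0 by (metis mult_cancel_left)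
  then show ?thesis unfolding \<phi>_def .
qed

lemma Dsum_zero:
  fixes N :: nat
  assumes "N \<ge> 1"
  shows "(\<Sum>l\<in>{1..N}. wt N l * cos (real l * (pi * real 0 / real N))) = real N - 1/2"
proof -
  have u: "{1..N} = insert N {1..N-1}" using assms by auto
  have "(\<Sum>l\<in>{1..N-1}. wt N l) = (\<Sum>l\<in>{1..N-1}. 1)" by (rule sum.cong) (auto simp: wt_def)
  then have "(\<Sum>l\<in>{1..N-1}. wt N l) = real (N - 1)" by simp
  then show ?thesis unfolding u using assms by (simp add: wt_def of_nat_diff)
qed

lemma dst_orth:
  fixes N a b :: nat
  assumes a: "1 \<le> a" "a \<le> N" and b: "1 \<le> b" "b \<le> N"
  shows "(\<Sum>l\<in>{1..N}. wt N l * (sin (real l * pi / real N * (real a - 1/2)) * sin (real l * pi / real N * (real b - 1/2))))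
       = (if a = b then real N / 2 else 0)"
proof -
  define D where "D m = (\<Sum>l\<in>{1..N}. wt N l * cos (real l * (pi * real m / real N)))" for m :: nat
  define d where "d = (if a \<le> b then b - a else a - b)"
  have N1: "N \<ge> 1" using a by simp
  have c1: "cos (real l * pi / real N * (real a - 1/2) - real l * pi / real N * (real b - 1/2)) = cos (real l * (pi * real d / real N))" for l
  proof -
    have e: "real l * pi / real N * (real a - 1/2) - real l * pi / real N * (real b - 1/2) = real l * pi / real N * (real a - real b)"
      by (simp only: right_diff_distrib; linarith)
    show ?thesis
    proof (cases "a \<le> b")
      case True
      then have "real a - real b = - real d" unfolding d_def by (simp add: of_nat_diff)
      then show ?thesis unfolding e by (simp add: mult.assoc)
    next
      case False
      then have "real a - real b = real d" unfolding d_def by (simp add: of_nat_diff)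
      then show ?thesis unfolding e by (simp add: mult.assoc)
    qed
  qed
  have c2: "cos (real l * pi / real N * (real a - 1/2) + real l * pi / real N * (real b - 1/2)) = cos (real l * (pi * real (a + b - 1) / real N))" for l
  proof -
    have "real l * pi / real N * (real a - 1/2) + real l * pi / real N * (real b - 1/2) = real l * (pi * real (a + b - 1) / real N)"
      using a by (simp add: of_nat_diff field_simps)
    then show ?thesis by simp
  qed
  have "(\<Sum>l\<in>{1..N}. wt N l * (sin (real l * pi / real N * (real a - 1/2)) * sin (real l * pi / real N * (real b - 1/2))))
      = (D d - D (a + b - 1)) / 2"
  proof -
    have t: "wt N l * (sin (real l * pi / real N * (real a - 1/2)) * sin (real l * pi / real N * (real b - 1/2)))
      = (wt N l * cos (real l * (pi * real d / real N)) - wt N l * cos (real l * (pi * real (a + b - 1) / real N))) / 2" for l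
      unfolding sin_times_sin c1 c2 by (simp add: algebra_simps)
    show ?thesis unfolding t D_def sum_divide_distrib[symmetric] sum_subtractf ..
  qed
  also have "D (a + b - 1) = -1/2" unfolding D_def by (rule Dsum_pos) (use a b in auto)
  also have "D d = (if a = b then real N - 1/2 else -1/2)"
  proof (cases "a = b")
    case True then have "d = 0" unfolding d_def by simp
    then show ?thesis using True Dsum_zero[OF N1] unfolding D_def by simp
  next
    case False then have "0 < d" "d < 2 * N" unfolding d_def using a b by auto
    then show ?thesis using False Dsum_pos unfolding D_def by simp
  qed
  finally show ?thesis by auto
qed


lemma half_lt: "(x::real) \<le> y \<Longrightarrow> 0 < y \<Longrightarrow> x / 2 < y" by linarith

lemma Pd_nonpos:
  assumes "j < P" "u \<le> 0"
  shows "Pd P j u = 0"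
proof -
  have "th (P - j) (u - real k) = 0" for k using assms by (intro th_nonpos) auto
  then show ?thesis unfolding Pd_def by simp
qed

lemma Aval_sym:
  assumes rp: "r \<le> p"
  shows "Aval p r (-x) = Aval p r x"
proof -
  have a: "(ff p r x 0 has_integral Aval p r (x - 0)) UNIV" by (rule ff_UNIV[OF rp])
  have b: "(ff p r 0 x has_integral Aval p r (0 - x)) UNIV" by (rule ff_UNIV[OF rp])
  have c: "ff p r x 0 = ff p r 0 x" by (rule ext) (simp add: ff_def mult.commute)
  show ?thesis using has_integral_unique[OF a[unfolded c] b] by simp
qed

lemma Aval_zero:
  assumes rp: "r \<le> p" and x: "x \<ge> real p + 1"
  shows "Aval p r x = 0"
  unfolding Aval_def using Pd_nonpos[of "2*r" "2*p+1" "real p + 1 - x"] rp x by simp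

lemma gsym_Aval:
  assumes rp: "r \<le> p"
  shows "gsym p r \<theta> = Aval p r 0 + 2 * (\<Sum>k = 1..p. Aval p r (real k) * cos (real k * \<theta>))"
proof -
  have nd: "nderiv (2*r) (cardB (2*p+1)) y = Pd (2*p+1) (2*r) y" for y
    by (rule nderiv_cardB) (use rp in simp)
  show ?thesis unfolding gsym_def nd Aval_def by (simp add: sum_distrib_left mult_ac)
qed

lemma Xbar_sym: "Xbar p r n i j = Xbar p r n j i"
  unfolding Xbar_def by (simp add: mult.commute)

lemma Xmat_mult:
  assumes "a < n" "dim_vec w = n"
  shows "(Xmat p r n *\<^sub>v w) $ a = (\<Sum>b<n. Xbar p r n (a+1) (b+1) * w $ b)"
  using assms unfolding Xmat_def by (auto simp: scalar_prod_def row_def atLeast0LessThan intro!: sum.cong)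

theorem mainTheorem14:
  fixes p n r :: nat
  assumes "p \<ge> 1" and "even p" and "n \<ge> p + p div 2" and "r \<le> p"
  shows "(\<forall>j\<in>{1..n}. eigenvector (Xmat p r n) (uvec n j)
            (real n powi (2 * int r - 1) * gsym p r (real j * pi / real n)))
       \<and> (\<forall>\<mu>. eigenvalue (Xmat p r n) \<mu> \<longrightarrow>
            (\<exists>j\<in>{1..n}. \<mu> = real n powi (2 * int r - 1) * gsym p r (real j * pi / real n)))"
proof -
  note p1 = assms(1) and ep = assms(2) and nb = assms(3) and rp = assms(4)
  have h1: "p div 2 \<ge> 1" using p1 ep by (auto elim!: evenE)
  have np: "p < n" using nb h1 by simp
  have n1: "n \<ge> 1" using np by simp
  have npos: "real n > 0" using n1 by simp
  define K where "K = real n ^ (2*r) / real n"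
  have powi: "real n powi (2 * int r - 1) = K"
  proof -
    have "real n powi (int (2*r) - 1) = real n powi (int (2*r)) / real n powi 1"
      by (rule power_int_diff) (use npos in simp)
    moreover have "real n powi (int (2*r)) = real n ^ (2*r)" by (rule power_int_of_nat)
    ultimately show ?thesis unfolding K_def by simp
  qed
  define Av where "Av d = Aval p r (of_int d)" for d :: int
  have Avsym: "Av (-d) = Av d" for d unfolding Av_def using Aval_sym[OF rp, of "of_int d"] by simp
  have Avz: "Av d = 0" if "d > int p" for d
  proof -
    have "of_int d \<ge> real p + 1" using that by linarith
    then show ?thesis unfolding Av_def by (rule Aval_zero[OF rp])
  qed
  have gs: "gsym p r \<theta> = Av 0 + 2 * (\<Sum>d\<in>{1..int p}. Av d * cos (of_int d * \<theta>))" for \<theta>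
  proof -
    have "(\<Sum>d\<in>{1..int p}. Av d * cos (of_int d * \<theta>)) = (\<Sum>k = 1..p. Aval p r (real k) * cos (real k * \<theta>))"
      by (rule sum.reindex_bij_witness[where i="\<lambda>k. int k" and j="\<lambda>d. nat d"]) (auto simp: Av_def)
    then show ?thesis unfolding gsym_Aval[OF rp] by (simp add: Av_def)
  qed
  define U where "U l a = sqrt (2 / real n) * cco n l * sin (real l * pi / real n * (real (a+1) - 1/2))" for l a :: nat
  have uidx: "uvec n l $ a = U l a" if "a < n" for l a
    using that unfolding uvec_def U_def by simp
  have Xe: "Xbar p r n i j = K * (Av (int i - int j) - Av (int i + int j - 1) - Av (int i + int j - 1 - 2 * int n))"
    if "1 \<le> i" "i \<le> n" "1 \<le> j" "j \<le> n" for i j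
    using Xbar_formula[OF ep p1 nb rp that] unfolding K_def Av_def by simp
  have EIG: "(\<Sum>b<n. Xbar p r n (a+1) (b+1) * U l b) = K * gsym p r (real l * pi / real n) * U l a"
    if a: "a < n" and l: "1 \<le> l" "l \<le> n" for a l
  proof -
    define \<theta> where "\<theta> = real l * pi / real n"
    define C where "C = sqrt (2 / real n) * cco n l"
    define I where "I = int a + 1"
    define N where "N = int n"
    define F where "F j = (Av (I - j) - Av (I + j - 1) - Av (I + j - 1 - 2*N)) * sin (\<theta> * (of_int j - 1/2))" for j
    have per: "sin (\<theta> * (of_int (2*N + 1 - k) - 1/2)) = - sin (\<theta> * (of_int k - 1/2))" for k
    proof -
      have "\<theta> * (of_int (2*N + 1 - k) - 1/2) = 2 * pi * of_int (int l) - \<theta> * (of_int k - 1/2)"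
        unfolding \<theta>_def N_def using npos by (simp add: field_simps)
      moreover have "sin (2 * pi * real l) = 0" using sin_npi[of "2*l"] by (simp add: mult_ac)
      moreover have "cos (2 * pi * real l) = 1" using cos_npi[of "2*l"] by (simp add: mult_ac)
      ultimately show ?thesis by (simp add: sin_diff)
    qed
    have es: "(\<Sum>j\<in>{1..N}. F j) = (Av 0 + 2 * (\<Sum>d\<in>{1..int p}. Av d * cos (of_int d * \<theta>))) * sin (\<theta> * (of_int I - 1/2))"
      unfolding F_def by (rule eig_sum[where Av=Av and p=p and N=N and \<theta>=\<theta> and i=I, OF Avsym Avz _ _ _ per]) (use np a in \<open>auto simp: N_def I_def\<close>)
    have "(\<Sum>b<n. Xbar p r n (a+1) (b+1) * U l b) = (\<Sum>b<n. K * C * F (int b + 1))"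
    proof (rule sum.cong[OF refl])
      fix b assume "b \<in> {..<n}"
      then have b: "b < n" by simp
      have xe: "Xbar p r n (a+1) (b+1) = K * (Av (int a - int b) - Av (int a + int b + 1) - Av (int a + int b + 1 - 2 * int n))"
        using Xe[of "a+1" "b+1"] a b by (simp add: algebra_simps)
      have fe: "F (int b + 1) = (Av (int a - int b) - Av (int a + int b + 1) - Av (int a + int b + 1 - 2 * int n)) * sin (\<theta> * (real b + 1/2))"
        unfolding F_def I_def N_def by (simp add: algebra_simps)
      have rb: "real (b+1) - 1/2 = real b + 1/2" by simp
      have ue: "U l b = C * sin (\<theta> * (real b + 1/2))" unfolding U_def C_def \<theta>_def rb ..
      show "Xbar p r n (a+1) (b+1) * U l b = K * C * F (int b + 1)"
        unfolding xe fe ue by (simp only: mult_ac)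
    qed
    also have "\<dots> = K * C * (\<Sum>j\<in>{1..N}. F j)"
    proof -
      have "(\<Sum>b<n. F (int b + 1)) = (\<Sum>j\<in>{1..N}. F j)"
        by (rule sum.reindex_bij_witness[where i="\<lambda>j. nat (j - 1)" and j="\<lambda>b. int b + 1"]) (auto simp: N_def)
      then show ?thesis by (simp only: sum_distrib_left[symmetric])
    qed
    also have "\<dots> = K * gsym p r (real l * pi / real n) * U l a"
      unfolding es gs[symmetric] U_def C_def I_def \<theta>_def by (simp add: algebra_simps)
    finally show ?thesis .
  qed
  have dimX: "dim_row (Xmat p r n) = n" unfolding Xmat_def by simp
  have P1: "eigenvector (Xmat p r n) (uvec n l) (real n powi (2 * int r - 1) * gsym p r (real l * pi / real n))"
    if l: "l \<in> {1..n}" for l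
  proof -
    have l1: "1 \<le> l" "l \<le> n" using l by auto
    have carr: "uvec n l \<in> carrier_vec n" unfolding uvec_def by simp
    have du: "dim_vec (uvec n l) = n" unfolding uvec_def by simp
    have nz: "uvec n l \<noteq> 0\<^sub>v n"
    proof
      assume "uvec n l = 0\<^sub>v n"
      then have "uvec n l $ 0 = 0" using n1 by simp
      then have z: "U l 0 = 0" using uidx[of 0 l] n1 by simp
      have "sin (real l * pi / real n * (real (0+1) - 1/2)) > 0"
      proof (rule sin_gt_zero)
        show "0 < real l * pi / real n * (real (0 + 1) - 1 / 2)" using l1 npos by simp
        have "real l * pi \<le> real n * pi" using l1 by (intro mult_right_mono) auto
        then have "real l * pi / real n \<le> pi" using npos by (simp add: divide_le_eq)
        then have le: "real l * pi / real n \<le> pi" .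
        have e: "real l * pi / real n * (real (0 + 1) - 1 / 2) = (real l * pi / real n) / 2" by simp
        show "real l * pi / real n * (real (0 + 1) - 1 / 2) < pi" unfolding e by (rule half_lt[OF le pi_gt_zero])
      qed
      moreover have "sqrt (2 / real n) > 0" using npos by simp
      moreover have "cco n l > 0" unfolding cco_def by simp
      ultimately have "U l 0 > 0" unfolding U_def by simp
      then show False using z by simp
    qed
    have mv: "Xmat p r n *\<^sub>v uvec n l = (real n powi (2 * int r - 1) * gsym p r (real l * pi / real n)) \<cdot>\<^sub>v uvec n l"
    proof (rule eq_vecI)
      show "dim_vec (Xmat p r n *\<^sub>v uvec n l) = dim_vec ((real n powi (2 * int r - 1) * gsym p r (real l * pi / real n)) \<cdot>\<^sub>v uvec n l)"
        using dimX by (simp add: uvec_def)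
      fix a assume "a < dim_vec ((real n powi (2 * int r - 1) * gsym p r (real l * pi / real n)) \<cdot>\<^sub>v uvec n l)"
      then have a: "a < n" by (simp add: uvec_def)
      have "(Xmat p r n *\<^sub>v uvec n l) $ a = (\<Sum>b<n. Xbar p r n (a+1) (b+1) * U l b)"
        unfolding Xmat_mult[OF a du] using uidx by simp
      also have "\<dots> = K * gsym p r (real l * pi / real n) * U l a" by (rule EIG[OF a l1])
      finally show "(Xmat p r n *\<^sub>v uvec n l) $ a = ((real n powi (2 * int r - 1) * gsym p r (real l * pi / real n)) \<cdot>\<^sub>v uvec n l) $ a"
        using a uidx[OF a] unfolding powi by (simp add: uvec_def)
    qed
    show ?thesis unfolding eigenvector_def dimX using carr nz mv by simp
  qed
  have ortho: "(\<Sum>l\<in>{1..n}. U l a * U l c) = (if a = c then 1 else 0)" if "a < n" "c < n" for a c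
  proof -
    have "(\<Sum>l\<in>{1..n}. U l a * U l c) = (2 / real n) * (\<Sum>l\<in>{1..n}. wt n l * (sin (real l * pi / real n * (real (a+1) - 1/2)) * sin (real l * pi / real n * (real (c+1) - 1/2))))"
    proof -
      have "U l a * U l c = (2 / real n) * (wt n l * (sin (real l * pi / real n * (real (a+1) - 1/2)) * sin (real l * pi / real n * (real (c+1) - 1/2))))" for l
      proof -
        have f1: "sqrt (2 / real n) * sqrt (2 / real n) = 2 / real n" using npos by simp
        have f2: "cco n l * cco n l = wt n l"
        proof -
          have "sqrt 2 * sqrt (2::real) = 2" by simp
          then have s2: "(1 / sqrt 2) * (1 / sqrt (2::real)) = 1/2" by (simp add: field_simps)
          show ?thesis unfolding cco_def wt_def using s2 by simp
        qed
        have "U l a * U l c = (sqrt (2 / real n) * sqrt (2 / real n)) * ((cco n l * cco n l) *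
            (sin (real l * pi / real n * (real (a+1) - 1/2)) * sin (real l * pi / real n * (real (c+1) - 1/2))))"
          unfolding U_def by (simp only: mult_ac)
        then show ?thesis unfolding f1 f2 .
      qed
      then show ?thesis by (simp add: sum_distrib_left)
    qed
    also have "\<dots> = (2 / real n) * (if a + 1 = c + 1 then real n / 2 else 0)"
      by (subst dst_orth) (use that in auto)
    finally show ?thesis using npos by auto
  qed
  have P2: "\<exists>j\<in>{1..n}. \<mu> = real n powi (2 * int r - 1) * gsym p r (real j * pi / real n)"
    if ev: "eigenvalue (Xmat p r n) \<mu>" for \<mu>
  proof (rule ccontr)
    assume ne: "\<not> (\<exists>j\<in>{1..n}. \<mu> = real n powi (2 * int r - 1) * gsym p r (real j * pi / real n))"
    obtain v where v: "v \<in> carrier_vec n" "v \<noteq> 0\<^sub>v n" "Xmat p r n *\<^sub>v v = \<mu> \<cdot>\<^sub>v v"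
      using ev unfolding eigenvalue_def eigenvector_def dimX by blast
    have dv: "dim_vec v = n" using v(1) by simp
    have Pz: "(\<Sum>a<n. U l a * v $ a) = 0" if l: "l \<in> {1..n}" for l
    proof -
      have l1: "1 \<le> l" "l \<le> n" using l by auto
      have "(\<Sum>a<n. U l a * (Xmat p r n *\<^sub>v v) $ a) = (\<Sum>a<n. U l a * (\<Sum>b<n. Xbar p r n (a+1) (b+1) * v $ b))"
        by (rule sum.cong[OF refl]) (simp add: Xmat_mult dv)
      also have "\<dots> = (\<Sum>a<n. \<Sum>b<n. U l a * Xbar p r n (a+1) (b+1) * v $ b)"
        by (simp add: sum_distrib_left mult_ac)
      also have "\<dots> = (\<Sum>b<n. \<Sum>a<n. U l a * Xbar p r n (a+1) (b+1) * v $ b)"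
        by (rule sum.swap)
      also have "\<dots> = (\<Sum>b<n. (\<Sum>a<n. Xbar p r n (b+1) (a+1) * U l a) * v $ b)"
      proof (rule sum.cong[OF refl])
        fix b
        show "(\<Sum>a<n. U l a * Xbar p r n (a+1) (b+1) * v $ b) = (\<Sum>a<n. Xbar p r n (b+1) (a+1) * U l a) * v $ b"
          unfolding sum_distrib_right by (rule sum.cong[OF refl]) (simp add: Xbar_sym[of p r n "Suc b"] mult_ac)
      qed
      also have "\<dots> = (\<Sum>b<n. (K * gsym p r (real l * pi / real n) * U l b) * v $ b)"
        by (rule sum.cong[OF refl], subst EIG) (use l1 in auto)
      finally have L: "(\<Sum>a<n. U l a * (Xmat p r n *\<^sub>v v) $ a) = K * gsym p r (real l * pi / real n) * (\<Sum>a<n. U l a * v $ a)"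
        by (simp add: sum_distrib_left mult_ac)
      have R: "(\<Sum>a<n. U l a * (Xmat p r n *\<^sub>v v) $ a) = \<mu> * (\<Sum>a<n. U l a * v $ a)"
        unfolding v(3) using dv by (simp add: sum_distrib_left mult_ac)
      have "\<mu> \<noteq> K * gsym p r (real l * pi / real n)" using ne l unfolding powi by auto
      then show ?thesis using L R by auto
    qed
    have "v = 0\<^sub>v n"
    proof (rule eq_vecI)
      show "dim_vec v = dim_vec (0\<^sub>v n)" using dv by simp
      fix c assume "c < dim_vec (0\<^sub>v n)"
      then have c: "c < n" by simp
      have "v $ c = (\<Sum>a<n. v $ a * (if a = c then 1 else 0))" using c by (simp add: if_distrib cong: if_cong)
      also have "\<dots> = (\<Sum>a<n. v $ a * (\<Sum>l\<in>{1..n}. U l a * U l c))"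
        by (rule sum.cong[OF refl], subst ortho) (use c in auto)
      also have "\<dots> = (\<Sum>l\<in>{1..n}. U l c * (\<Sum>a<n. U l a * v $ a))"
        by (simp add: sum_distrib_left mult_ac) (rule sum.swap)
      also have "\<dots> = 0" by (simp add: Pz)
      finally show "v $ c = 0\<^sub>v n $ c" using c by simp
    qed
    then show False using v(2) by simp
  qed
  show ?thesis using P1 P2 by blast
qed

end
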